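(* Under the hypotheses of the theorem on estimating $t^\star_\delta$ (stated in the context), there are constants $c_{1},c_{2},c_{3},c_{4},L_T,U_T,U_{\Delta}>0$ such that for $a\in\{0,1\}$, all $n$ and all $r_n,\Delta_n,\epsilon$ with $L_T(\phi_{n,1}\vee\phi_{n,0})<r_n<U_T$, $2\big(g_{\delta,-}(4r_n)\vee g_{\delta,+}(4r_n)\big)<\Delta_n<U_\Delta$ and $L_T(\phi_{n,1}\vee\phi_{n,0})<\epsilon<r_n$, $$P^{\otimes n}\big(|\widehat T_{\delta,a}-T^\star_{\delta,a}|>\epsilon\big)\le\psi_{n,1}(\epsilon)+\sum_{j\in\{-,+\}}I\big(\delta=D_j(t^\star_\delta)\big)\psi_{n,2}\big(g_{\delta,j}(\omega(\epsilon,r_n))\big),$$ with $\psi_{n,1}(x)=c_1\exp(-c_2(x/(\phi_{n,1}\vee\phi_{n,0}))^2)$, $\psi_{n,2}(x)=c_3\exp(-c_4nx^2)$.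
   Context: Setting: $(X,A,Y)$ on $\mathbb{R}^d\times\{0,1\}\times\{0,1\}$ with law $P$, $p_a=P(A=a)>0$, $P_{X|A=a}$ the conditional law, $\eta_a(x)=P(Y=1\mid A=a,X=x)$. $D_-(t)=P_{X|A=1}\big(\eta_1(X)>\tfrac12+\tfrac{t}{2p_1}\big)-P_{X|A=0}\big(\eta_0(X)\ge\tfrac12-\tfrac{t}{2p_0}\big)$, $D_+(t)=P_{X|A=1}\big(\eta_1(X)\ge\tfrac12+\tfrac{t}{2p_1}\big)-P_{X|A=0}\big(\eta_0(X)>\tfrac12-\tfrac{t}{2p_0}\big)$; $t^\star_\delta=\inf\{t:D_-(t)<\delta\}$ if $D_-(0)>\delta$, else $0$; $T^\star_{\delta,a}=\tfrac12+\tfrac{(2a-1)t^\star_\delta}{2p_a}$; standing assumption $D_+(0)\ge-D_-(0)$; $g_{\delta,-}(\epsilon)=D_-(t^\star_\delta)-D_-(t^\star_\delta+\epsilon)$, $g_{\delta,+}(\epsilon)=D_+(t^\star_\delta-\epsilon)-D_+(t^\star_\delta)$. Hypotheses: $(\eta_1,\eta_0)$ satisfies the $\gamma$-margin condition at $\delta$ (there are $\epsilon_0,U_\gamma>0$ with $\max\{g_{\delta,\pm}(\epsilon)\}\le U_\gamma\epsilon^\gamma$ for $0<\epsilon<\epsilon_0$ and $g_{\delta,j}(\epsilon)\ge U_\gamma^{-1}\epsilon^\gamma$ for $0<\epsilon<\epsilon_0$ whenever $D_j(t^\star_\delta)=\delta$); $\phi_{n,a}$ positive non-increasing with $\phi_{n,a}\ge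 c_\mu n^{-1/2}$; estimators $\widehat\eta_a$ (measurable functions of an i.i.d. sample $\mathcal S_n$ of size $n$ from $P$) satisfy: there are $c_{1,\eta},c_{2,\eta},L_\eta,U_\eta>0$ and $\Omega$ with $P_X(\Omega)=1$ such that $P^{\otimes n}(\sup_{x\in\Omega}|\widehat\eta_a(x)-\eta_a(x)|>\epsilon)\le c_{1,\eta}\exp(-c_{2,\eta}(\epsilon/\phi_{n,a})^2)$ for $L_\eta\phi_{n,a}<\epsilon<U_\eta$. With $n_a=\#\{i:A_i=a\}$ and $X_{a,j}$ the group-$a$ features, $\widehat D_n(t)=\frac1{n_1}\sum_jI(\widehat\eta_1(X_{1,j})>\tfrac12+\tfrac{nt}{2n_1})-\frac1{n_0}\sum_jI(\widehat\eta_0(X_{0,j})>\tfrac12-\tfrac{nt}{2n_0})$; $\widehat t_{\mathrm{mid}}=\inf\{t\ge0:\widehat D_n(t)<\delta\}$, $\widehat t_{\min}=\inf\{t\ge0:\widehat D_n(t)<\delta+\Delta_n\}$, $\widehat t_{\max}=\inf\{t\ge0:\widehat D_n(t)<\delta-\Delta_n\}$; $\widehat t_\delta=\widehat t_{\min}$ if $\widehat t_{\mathrm{mid}}-\widehat t_{\min}\le r_n$, $=\widehat t_{\max}$ if $\widehat t_{\mathrm{mid}}-\widehat t_{\min}>r_n$ and $\widehat t_{\max}-\widehat t_{\mathrm{mid}}\le r_n$, $=\widehat t_{\mathrm{mid}}$ otherwise. The estimated thresholds are $\widehat T_{\delta,a}=\tfrac12+\tfrac{(2a-1)n\widehat t_\delta}{2n_a}$.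 $\omega(\epsilon,r)=\epsilon$ if $t^\star_\delta>0$ and $D_-(t^\star_\delta)=D_+(t^\star_\delta)=\delta$, and $\omega(\epsilon,r)=r$ otherwise. Constants may depend on $P$, $\delta$ and the convergence constants. *)

theory Defs
  imports "HOL-Probability.Probability"
begin

(* Data: triples (X, A, Y) with X in a Euclidean space (R^d), A, Y in {0,1}
   encoded as bool (True = 1, False = 0). *)

definition sgnA :: "bool \<Rightarrow> real" where
  "sgnA a = (if a then 1 else -1)"

definition pA :: "('x \<times> bool \<times> bool) measure \<Rightarrow> bool \<Rightarrow> real" where
  "pA P a = measure P {w \<in> space P. fst (snd w) = a}"

definition condX :: "('x \<times> bool \<times> bool) measure \<Rightarrow> bool \<Rightarrow> 'x set \<Rightarrow> real" where
  "condX P a S = measure P {w \<in> space P. fst w \<in> S \<and> fst (snd w) = a} / pA P a"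

(* eta_a(x) = P(Y = 1 | A = a, X = x): a (Borel, [0,1]-valued) version of the
   conditional probability, characterised by its defining integral identity *)
definition is_regression :: "('x::euclidean_space \<times> bool \<times> bool) measure \<Rightarrow> (bool \<Rightarrow> 'x \<Rightarrow> real) \<Rightarrow> bool" where
  "is_regression P \<eta> \<longleftrightarrow> (\<forall>a. \<eta> a \<in> borel_measurable borel \<and> (\<forall>x. 0 \<le> \<eta> a x \<and> \<eta> a x \<le> 1) \<and>
     (\<forall>S \<in> sets borel.
        measure P {w \<in> space P. fst w \<in> S \<and> fst (snd w) = a \<and> snd (snd w)}
        = (\<integral>w. indicator {w. fst w \<in> S \<and> fst (snd w) = a} w * \<eta> a (fst w) \<partial>P)))"

definition Dm :: "('x \<times> bool \<times> bool) measure \<Rightarrow> (bool \<Rightarrow> 'x \<Rightarrow> real) \<Rightarrow> real \<Rightarrow> real" where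
  "Dm P \<eta> t = condX P True {x. \<eta> True x > 1/2 + t / (2 * pA P True)}
             - condX P False {x. \<eta> False x \<ge> 1/2 - t / (2 * pA P False)}"

definition Dp :: "('x \<times> bool \<times> bool) measure \<Rightarrow> (bool \<Rightarrow> 'x \<Rightarrow> real) \<Rightarrow> real \<Rightarrow> real" where
  "Dp P \<eta> t = condX P True {x. \<eta> True x \<ge> 1/2 + t / (2 * pA P True)}
             - condX P False {x. \<eta> False x > 1/2 - t / (2 * pA P False)}"

definition tstar :: "('x \<times> bool \<times> bool) measure \<Rightarrow> (bool \<Rightarrow> 'x \<Rightarrow> real) \<Rightarrow> real \<Rightarrow> real" where
  "tstar P \<eta> \<delta> = (if Dm P \<eta> 0 > \<delta> then Inf {t. Dm P \<eta> t < \<delta>} else 0)"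

definition Tstar :: "('x \<times> bool \<times> bool) measure \<Rightarrow> (bool \<Rightarrow> 'x \<Rightarrow> real) \<Rightarrow> real \<Rightarrow> bool \<Rightarrow> real" where
  "Tstar P \<eta> \<delta> a = 1/2 + sgnA a * tstar P \<eta> \<delta> / (2 * pA P a)"

definition gm :: "('x \<times> bool \<times> bool) measure \<Rightarrow> (bool \<Rightarrow> 'x \<Rightarrow> real) \<Rightarrow> real \<Rightarrow> real \<Rightarrow> real" where
  "gm P \<eta> \<delta> \<epsilon> = Dm P \<eta> (tstar P \<eta> \<delta>) - Dm P \<eta> (tstar P \<eta> \<delta> + \<epsilon>)"

definition gp :: "('x \<times> bool \<times> bool) measure \<Rightarrow> (bool \<Rightarrow> 'x \<Rightarrow> real) \<Rightarrow> real \<Rightarrow> real \<Rightarrow> real" where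
  "gp P \<eta> \<delta> \<epsilon> = Dp P \<eta> (tstar P \<eta> \<delta> - \<epsilon>) - Dp P \<eta> (tstar P \<eta> \<delta>)"

definition margin_condition :: "('x \<times> bool \<times> bool) measure \<Rightarrow> (bool \<Rightarrow> 'x \<Rightarrow> real) \<Rightarrow> real \<Rightarrow> real \<Rightarrow> bool" where
  "margin_condition P \<eta> \<delta> \<gamma> \<longleftrightarrow> (\<exists>\<epsilon>0 U. \<epsilon>0 > 0 \<and> U > 0 \<and>
     (\<forall>\<epsilon>. 0 < \<epsilon> \<and> \<epsilon> < \<epsilon>0 \<longrightarrow>
        max (gm P \<eta> \<delta> \<epsilon>) (gp P \<eta> \<delta> \<epsilon>) \<le> U * \<epsilon> powr \<gamma>
      \<and> (Dm P \<eta> (tstar P \<eta> \<delta>) = \<delta> \<longrightarrow> gm P \<eta> \<delta> \<epsilon> \<ge> \<epsilon> powr \<gamma> / U)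
      \<and> (Dp P \<eta> (tstar P \<eta> \<delta>) = \<delta> \<longrightarrow> gp P \<eta> \<delta> \<epsilon> \<ge> \<epsilon> powr \<gamma> / U)))"

definition omega :: "('x \<times> bool \<times> bool) measure \<Rightarrow> (bool \<Rightarrow> 'x \<Rightarrow> real) \<Rightarrow> real \<Rightarrow> real \<Rightarrow> real \<Rightarrow> real" where
  "omega P \<eta> \<delta> \<epsilon> r = (if tstar P \<eta> \<delta> > 0 \<and> Dm P \<eta> (tstar P \<eta> \<delta>) = \<delta> \<and> Dp P \<eta> (tstar P \<eta> \<delta>) = \<delta>
                         then \<epsilon> else r)"

(* ---- empirical quantities; a sample of size n is s :: nat => ..., with entries s 0, ..., s (n-1);
   the estimator etahat n a s x is computed from the sample s ---- *)

definition ncount :: "nat \<Rightarrow> (nat \<Rightarrow> 'x \<times> bool \<times> bool) \<Rightarrow> bool \<Rightarrow> nat" where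
  "ncount n s a = card {i. i < n \<and> fst (snd (s i)) = a}"

definition Dhat :: "(nat \<Rightarrow> bool \<Rightarrow> (nat \<Rightarrow> 'x \<times> bool \<times> bool) \<Rightarrow> 'x \<Rightarrow> real)
                    \<Rightarrow> nat \<Rightarrow> (nat \<Rightarrow> 'x \<times> bool \<times> bool) \<Rightarrow> real \<Rightarrow> real" where
  "Dhat eh n s t =
     (1 / real (ncount n s True)) *
       (\<Sum>i\<in>{i. i < n \<and> fst (snd (s i))}.
          (if eh n True s (fst (s i)) > 1/2 + real n * t / (2 * real (ncount n s True)) then 1 else 0))
   - (1 / real (ncount n s False)) *
       (\<Sum>i\<in>{i. i < n \<and> \<not> fst (snd (s i))}.
          (if eh n False s (fst (s i)) > 1/2 - real n * t / (2 * real (ncount n s False)) then 1 else 0))"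

definition tlevel :: "(nat \<Rightarrow> bool \<Rightarrow> (nat \<Rightarrow> 'x \<times> bool \<times> bool) \<Rightarrow> 'x \<Rightarrow> real)
                    \<Rightarrow> nat \<Rightarrow> (nat \<Rightarrow> 'x \<times> bool \<times> bool) \<Rightarrow> real \<Rightarrow> real" where
  "tlevel eh n s c = Inf {t. 0 \<le> t \<and> Dhat eh n s t < c}"

definition that :: "(nat \<Rightarrow> bool \<Rightarrow> (nat \<Rightarrow> 'x \<times> bool \<times> bool) \<Rightarrow> 'x \<Rightarrow> real)
                    \<Rightarrow> nat \<Rightarrow> (nat \<Rightarrow> 'x \<times> bool \<times> bool) \<Rightarrow> real \<Rightarrow> real \<Rightarrow> real \<Rightarrow> real" where
  "that eh n s \<delta> \<Delta> r =
     (let tmid = tlevel eh n s \<delta>; tmin = tlevel eh n s (\<delta> + \<Delta>); tmax = tlevel eh n s (\<delta> - \<Delta>)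
      in if tmid - tmin \<le> r then tmin
         else if tmax - tmid \<le> r then tmax
         else tmid)"

definition That :: "(nat \<Rightarrow> bool \<Rightarrow> (nat \<Rightarrow> 'x \<times> bool \<times> bool) \<Rightarrow> 'x \<Rightarrow> real)
                    \<Rightarrow> nat \<Rightarrow> (nat \<Rightarrow> 'x \<times> bool \<times> bool) \<Rightarrow> real \<Rightarrow> real \<Rightarrow> real \<Rightarrow> bool \<Rightarrow> real" where
  "That eh n s \<delta> \<Delta> r a = 1/2 + sgnA a * real n * that eh n s \<delta> \<Delta> r / (2 * real (ncount n s a))"

(* outer probability bound: the event E is contained in a measurable set of measure <= b
   (coincides with "measure M E <= b" when E is measurable) *)
definition outer_prob_le :: "'a measure \<Rightarrow> 'a set \<Rightarrow> real \<Rightarrow> bool" where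
  "outer_prob_le M E b \<longleftrightarrow> (\<exists>F \<in> sets M. E \<inter> space M \<subseteq> F \<and> measure M F \<le> b)"

end

theory Submission
  imports Defs
begin

lemma ratio_bounds:
  fixes c m p q \<tau> :: real
  assumes "0 \<le> m" "m \<le> p" "\<bar>q - p\<bar> \<le> \<tau>" "\<tau> \<le> p/2" "\<bar>c - m\<bar> \<le> \<tau>" "0 < p"
  shows "c / q \<le> m/p + 4*\<tau>/p" "c/q \<ge> m/p - 4*\<tau>/p"
proof -
  have q: "q \<ge> p/2" using assms by linarith
  hence qp: "q > 0" using assms by simp
  have eq: "c/q - m/p = (p*(c-m) + m*(p-q))/(p*q)" using qp assms by (simp add: field_simps)
  have "\<bar>p*(c-m) + m*(p-q)\<bar> \<le> p*\<tau> + p*\<tau>"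
  proof -
    have "\<bar>p*(c-m)\<bar> \<le> p*\<tau>" using assms by (simp add: abs_mult mult_left_mono)
    moreover have "\<bar>m*(p-q)\<bar> \<le> p*\<tau>" using assms by (simp add: abs_mult mult_mono)
    ultimately show ?thesis by (smt (verit))
  qed
  moreover have "p*\<tau> + p*\<tau> = 2*p*\<tau>" by simp
  ultimately have "\<bar>p*(c-m) + m*(p-q)\<bar> \<le> 2*p*\<tau>" by linarith
  hence "\<bar>p*(c-m) + m*(p-q)\<bar>/(p*q) \<le> (2*p*\<tau>)/(p*q)" using qp assms by (intro divide_right_mono) auto
  note le1 = this
  have "\<bar>c/q - m/p\<bar> = \<bar>(p*(c-m) + m*(p-q))/(p*q)\<bar>" by (simp only: eq)
  also have "\<dots> = \<bar>p*(c-m) + m*(p-q)\<bar>/(p*q)"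
  proof -
    have "\<bar>p*q\<bar> = p*q" using qp assms by simp
    thus ?thesis by (simp only: abs_divide)
  qed
  also have "\<dots> \<le> (2*p*\<tau>)/(p*q)" by (rule le1)
  also have "(2*p*\<tau>)/(p*q) = 2*\<tau>/q" using assms by simp
  also have "2*\<tau>/q \<le> 2*\<tau>/(p/2)" using q assms by (intro divide_left_mono) (auto simp: abs_le_iff)
  also have "2*\<tau>/(p/2) = 4*\<tau>/p" by simp
  finally have "\<bar>c/q - m/p\<bar> \<le> 4*\<tau>/p" .
  thus "c / q \<le> m/p + 4*\<tau>/p" "c/q \<ge> m/p - 4*\<tau>/p" by linarith+
qed

lemma thresh_bounds:
  fixes p q \<tau> e B t \<kappa> pm :: real
  assumes "0 < pm" "pm \<le> p" "p \<le> 1" "\<bar>q - p\<bar> \<le> \<tau>" "\<tau> \<le> p/2" "0 \<le> t" "t \<le> B" "0 \<le> e"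
    "\<kappa> \<ge> 2*e + 2*B*\<tau>/pm"
  shows "(t - \<kappa>)/(2*p) \<le> t/(2*q) - e" "t/(2*q) + e \<le> (t + \<kappa>)/(2*p)"
proof -
  have p: "p > 0" using assms by simp
  have tau: "\<tau> \<ge> 0" using assms by simp
  have q: "q \<ge> p/2" using assms by linarith
  hence qp: "q > 0" using p by simp
  have eq: "t/(2*q) - t/(2*p) = t*(p-q)/(2*p*q)" using qp p by (simp add: field_simps)
  have "\<bar>t*(p-q)\<bar> \<le> B*\<tau>" using assms by (simp add: abs_mult mult_mono)
  hence le1: "\<bar>t*(p-q)\<bar>/(2*p*q) \<le> B*\<tau>/(2*p*q)" using qp p by (intro divide_right_mono) auto
  have "\<bar>t/(2*q) - t/(2*p)\<bar> = \<bar>t*(p-q)/(2*p*q)\<bar>" by (simp only: eq)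
  also have "\<dots> = \<bar>t*(p-q)\<bar>/(2*p*q)"
  proof -
    have "\<bar>2*p*q\<bar> = 2*p*q" using qp p by simp
    thus ?thesis by (simp only: abs_divide)
  qed
  also have "\<dots> \<le> B*\<tau>/(2*p*q)" by (rule le1)
  also have "B*\<tau>/(2*p*q) \<le> B*\<tau>/(2*p*(p/2))"
    using q p qp tau assms by (intro divide_left_mono mult_nonneg_nonneg) auto
  also have "B*\<tau>/(2*p*(p/2)) = B*\<tau>/(p*p)" by simp
  finally have d: "\<bar>t/(2*q) - t/(2*p)\<bar> \<le> B*\<tau>/(p*p)" .
  have B: "B \<ge> 0" using assms by simp
  have "2*p*e \<le> 2*e" using assms by (simp add: mult_left_le_one_le)
  moreover have "2*B*\<tau>/p \<le> 2*B*\<tau>/pm" using assms B tau by (intro divide_left_mono) auto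
  ultimately have k: "\<kappa> \<ge> 2*p*e + 2*B*\<tau>/p" using assms by linarith
  have "\<kappa>/(2*p) \<ge> (2*p*e + 2*B*\<tau>/p)/(2*p)" using k p by (intro divide_right_mono) auto
  also have "(2*p*e + 2*B*\<tau>/p)/(2*p) = e + B*\<tau>/(p*p)" using p by (simp add: field_simps)
  finally have k2: "\<kappa>/(2*p) \<ge> e + B*\<tau>/(p*p)" .
  have d1: "t/(2*p) - t/(2*q) \<le> B*\<tau>/(p*p)" "t/(2*q) - t/(2*p) \<le> B*\<tau>/(p*p)"
    using d unfolding abs_le_iff by linarith+
  have e1: "(t - \<kappa>)/(2*p) = t/(2*p) - \<kappa>/(2*p)" by (simp add: diff_divide_distrib)
  have e2: "(t + \<kappa>)/(2*p) = t/(2*p) + \<kappa>/(2*p)" by (simp add: add_divide_distrib)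
  show "(t - \<kappa>)/(2*p) \<le> t/(2*q) - e" using d1 k2 e1 by linarith
  show "t/(2*q) + e \<le> (t + \<kappa>)/(2*p)" using d1 k2 e2 by linarith
qed

lemma comp_meas: "i \<in> I \<Longrightarrow> (\<lambda>s. s i) \<in> measurable (PiM I (\<lambda>_. M)) M"
  by (rule measurable_component_singleton)

lemma PiM_coord_indep:
  assumes P: "prob_space P" and n: "I \<noteq> {}" "finite I"
  shows "prob_space.indep_vars (PiM I (\<lambda>_. P)) (\<lambda>_. P) (\<lambda>i s. s i) I"
proof -
  interpret M: prob_space "PiM I (\<lambda>_. P)" by (intro prob_space_PiM) (use P in auto)
  show ?thesis
  proof (subst M.indep_vars_iff_distr_eq_PiM')
    show "I \<noteq> {}" by fact
    show "\<And>i. i \<in> I \<Longrightarrow> (\<lambda>s. s i) \<in> measurable (PiM I (\<lambda>_. P)) P" by (rule comp_meas)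
    have 1: "distr (PiM I (\<lambda>_. P)) (PiM I (\<lambda>_. P)) (\<lambda>x. \<lambda>i\<in>I. x i) = PiM I (\<lambda>_. P)"
      apply (subst distr_cong[where g="\<lambda>x. x"])
      apply (auto simp: space_PiM PiE_def extensional_def restrict_def fun_eq_iff)
      done
    have 2: "(PiM I (\<lambda>i. distr (PiM I (\<lambda>_. P)) P (\<lambda>x. x i))) = PiM I (\<lambda>_. P)"
      by (intro PiM_cong refl distr_PiM_component) (use P in auto)
    show "distr (PiM I (\<lambda>_. P)) (PiM I (\<lambda>_. P)) (\<lambda>x. \<lambda>i\<in>I. x i) = (PiM I (\<lambda>i. distr (PiM I (\<lambda>_. P)) P (\<lambda>x. x i)))"
      using 1 2 by simp
  qed
qed

lemma hoeff_set:
  fixes n :: nat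
  assumes P: "prob_space P" and W: "W \<in> sets P" and n: "1 \<le> n" and tau: "0 \<le> \<tau>"
  shows "measure (PiM {..<n} (\<lambda>_. P)) {s \<in> space (PiM {..<n} (\<lambda>_. P)).
           \<bar>real (card {i. i < n \<and> s i \<in> W}) / real n - measure P W\<bar> \<ge> \<tau>} \<le> 2 * exp (-2 * real n * \<tau>\<^sup>2)"
proof -
  let ?M = "PiM {..<n} (\<lambda>_. P)"
  interpret M: prob_space ?M by (intro prob_space_PiM) (use P in auto)
  have ne: "{..<n} \<noteq> {}" using n by (auto simp: lessThan_empty_iff)
  note ind0 = PiM_coord_indep[OF P ne finite_lessThan[of n]]
  have ind: "M.indep_vars (\<lambda>_. borel) (\<lambda>i s. indicator W (s i) :: real) {..<n}"
    by (rule M.indep_vars_compose2[OF ind0]) (use W in auto)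
  interpret H: Hoeffding_ineq ?M "{..<n}" "\<lambda>i s. indicator W (s i) :: real" "\<lambda>_. 0" "\<lambda>_. 1"
     "\<Sum>i\<in>{..<n}. M.expectation (\<lambda>s. indicator W (s i) :: real)"
    by unfold_locales (use ind in \<open>auto simp: indicator_def\<close>)
  have E: "M.expectation (\<lambda>s. indicator W (s i) :: real) = measure P W" if "i < n" for i
  proof -
    have "M.expectation (\<lambda>s. indicator W (s i) :: real) = integral\<^sup>L (distr ?M P (\<lambda>s. s i)) (indicator W)"
      by (subst integral_distr) (use W that comp_meas[of i "{..<n}" P] in auto)
    also have "distr ?M P (\<lambda>s. s i) = P" by (rule distr_PiM_component) (use P that in auto)
    finally show ?thesis using W by simp
  qed
  have mu: "(\<Sum>i\<in>{..<n}. M.expectation (\<lambda>s. indicator W (s i) :: real)) = n * measure P W"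
    using E by simp
  have sumc: "(\<Sum>i\<in>{..<n}. indicator W (s i) :: real) = real (card {i. i < n \<and> s i \<in> W})" for s
  proof -
    have "(\<Sum>i\<in>{..<n}. indicator W (s i) :: real) = (\<Sum>i\<in>{..<n}. indicator {i. s i \<in> W} i)"
      by (simp add: indicator_def)
    also have "\<dots> = real (card ({..<n} \<inter> {i. s i \<in> W}))"
      by (simp add: indicator_def sum.If_cases)
    also have "{..<n} \<inter> {i. s i \<in> W} = {i. i < n \<and> s i \<in> W}" by auto
    finally show ?thesis .
  qed
  have pos: "(\<Sum>i\<in>{..<n}. ((1::real) - 0)\<^sup>2) > 0" using n by simp
  have "M.prob {s \<in> space ?M. \<bar>(\<Sum>i\<in>{..<n}. indicator W (s i)) - n * measure P W\<bar> \<ge> n * \<tau>}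
        \<le> 2 * exp (-2 * (n*\<tau>)\<^sup>2 / (\<Sum>i\<in>{..<n}. ((1::real) - 0)\<^sup>2))"
    using H.Hoeffding_ineq_abs_ge[of "n*\<tau>"] tau mu pos by simp
  also have "(-2 * (real n*\<tau>)\<^sup>2 / (\<Sum>i\<in>{..<n}. ((1::real) - 0)\<^sup>2)) = -2 * real n * \<tau>\<^sup>2"
    using n by (simp add: power2_eq_square)
  also have "{s \<in> space ?M. \<bar>(\<Sum>i\<in>{..<n}. indicator W (s i)) - n * measure P W\<bar> \<ge> n * \<tau>}
     = {s \<in> space ?M. \<bar>real (card {i. i < n \<and> s i \<in> W}) / n - measure P W\<bar> \<ge> \<tau>}"
  proof -
    have "\<bar>c - n * m\<bar> \<ge> n * \<tau> \<longleftrightarrow> \<bar>c / n - m\<bar> \<ge> \<tau>" for c m :: real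
    proof -
      have "c - n*m = n * (c/n - m)" using n by (simp add: field_simps)
      hence "\<bar>c - n * m\<bar> = n * \<bar>c/n - m\<bar>" by (simp add: abs_mult)
      thus ?thesis using n by simp
    qed
    thus ?thesis by (simp add: sumc)
  qed
  finally show ?thesis .
qed

lemma ind_meas: "W \<in> sets P \<Longrightarrow> i \<in> I \<Longrightarrow> (\<lambda>s. indicator W (s i) :: real) \<in> borel_measurable (PiM I (\<lambda>_. P))"
  by (rule measurable_compose[OF comp_meas borel_measurable_indicator])
lemma HB_meas:
  assumes W: "W \<in> sets P"
  shows "{s \<in> space (PiM {..<n} (\<lambda>_. P)). \<tau> \<le> \<bar>(\<Sum>i<n. indicator W (s i) :: real) / real n - c\<bar>} \<in> sets (PiM {..<n} (\<lambda>_. P))"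
proof -
  let ?f = "\<lambda>s. \<bar>(\<Sum>i<n. indicator W (s i) :: real) / real n - c\<bar>"
  have f: "?f \<in> borel_measurable (PiM {..<n} (\<lambda>_. P))"
    by (intro borel_measurable_abs borel_measurable_diff borel_measurable_divide borel_measurable_sum ind_meas[OF W]) auto
  have "?f -` {\<tau>..} \<inter> space (PiM {..<n} (\<lambda>_. P)) \<in> sets (PiM {..<n} (\<lambda>_. P))"
    by (rule measurable_sets[OF f]) auto
  also have "?f -` {\<tau>..} \<inter> space (PiM {..<n} (\<lambda>_. P)) = {s \<in> space (PiM {..<n} (\<lambda>_. P)). \<tau> \<le> ?f s}" by auto
  finally show ?thesis .
qed

lemma card_sum_ind: fixes n :: nat shows "real (card {i. i < n \<and> s i \<in> W}) = (\<Sum>i<n. indicator W (s i) :: real)"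
proof -
  have "(\<Sum>i\<in>{..<n}. indicator W (s i) :: real) = (\<Sum>i\<in>{..<n}. indicator {i. s i \<in> W} i)"
    by (simp add: indicator_def)
  also have "\<dots> = real (card ({..<n} \<inter> {i. s i \<in> W}))"
    by (simp add: indicator_def sum.If_cases)
  also have "{..<n} \<inter> {i. s i \<in> W} = {i. i < n \<and> s i \<in> W}" by auto
  finally show ?thesis by simp
qed

lemma HB_sets:
  fixes n :: nat
  assumes W: "W \<in> sets P"
  shows "{s \<in> space (PiM {..<n} (\<lambda>_. P)). \<tau> \<le> \<bar>real (card {i. i < n \<and> s i \<in> W}) / real n - c\<bar>} \<in> sets (PiM {..<n} (\<lambda>_. P))"
  using HB_meas[OF W, of n \<tau> c] by (simp add: card_sum_ind)

definition lev :: "('x \<times> bool \<times> bool) measure \<Rightarrow> bool \<Rightarrow> real \<Rightarrow> real" where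
  "lev P a t = 1/2 + sgnA a * t / (2 * pA P a)"

definition mu :: "('x \<times> bool \<times> bool) measure \<Rightarrow> bool \<Rightarrow> 'x set \<Rightarrow> real" where
  "mu P a S = measure P {w \<in> space P. fst w \<in> S \<and> fst (snd w) = a}"

lemma small_powr_le0:
  fixes a U e0 g :: real
  assumes "e0 > 0" "U > 0" "g > 0" and h: "\<And>x. 0 < x \<Longrightarrow> x < e0 \<Longrightarrow> a \<le> U * x powr g"
  shows "a \<le> 0"
proof (rule ccontr)
  assume "\<not> a \<le> 0" hence a: "a > 0" by simp
  define y where "y = (a / (2*U)) powr (1/g)"
  define x where "x = min (e0/2) y"
  have y: "y > 0" using a assms by (simp add: y_def)
  have x: "0 < x" "x < e0" using y assms by (auto simp: x_def)
  have "x powr g \<le> y powr g" by (rule powr_mono2) (use x assms in \<open>auto simp: x_def\<close>)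
  also have "y powr g = a / (2*U)" using a assms by (simp add: y_def powr_powr)
  finally have "U * x powr g \<le> U * (a/(2*U))" using assms by (intro mult_left_mono) auto
  also have "\<dots> = a/2" using assms by simp
  finally have "U * x powr g \<le> a/2" .
  with h[OF x] a show False by simp
qed

locale pop =
  fixes P :: "('x::euclidean_space \<times> bool \<times> bool) measure" and \<eta> :: "bool \<Rightarrow> 'x \<Rightarrow> real"
  assumes ps: "prob_space P"
  and sP: "sets P = sets (borel \<Otimes>\<^sub>M count_space UNIV \<Otimes>\<^sub>M count_space UNIV)"
  and pApos: "\<And>a. pA P a > 0"
  and reg: "is_regression P \<eta>"
begin

interpretation PS: prob_space P by (rule ps)

lemma mfst: "fst \<in> measurable P borel"
  using measurable_cong_sets[OF sP refl, of borel] by (metis measurable_fst)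

lemma mA: "(\<lambda>w. fst (snd w)) \<in> measurable P (count_space UNIV)"
  apply (subst measurable_cong_sets[OF sP refl])
  by (rule measurable_compose[OF measurable_snd measurable_fst])

lemma eta_meas: "\<eta> a \<in> borel_measurable borel"
  using reg unfolding is_regression_def by blast

lemma eta_01: "0 \<le> \<eta> a x" "\<eta> a x \<le> 1"
  using reg unfolding is_regression_def by blast+

lemma Wset: "S \<in> sets borel \<Longrightarrow> {w\<in>space P. fst w \<in> S \<and> fst (snd w) = a} \<in> sets P"
proof -
  assume S: "S \<in> sets borel"
  have 1: "fst -` S \<inter> space P \<in> sets P" using mfst S by (rule measurable_sets)
  have 2: "(\<lambda>w. fst (snd w)) -` {a} \<inter> space P \<in> sets P" using mA by (rule measurable_sets) auto
  have "(fst -` S \<inter> space P) \<inter> ((\<lambda>w. fst (snd w)) -` {a} \<inter> space P) \<in> sets P" using 1 2 by blast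
  also have "(fst -` S \<inter> space P) \<inter> ((\<lambda>w. fst (snd w)) -` {a} \<inter> space P) = {w\<in>space P. fst w \<in> S \<and> fst (snd w) = a}" by auto
  finally show ?thesis .
qed

lemma sets_gt: "{x. c < \<eta> a x} \<in> sets borel"
proof -
  have "{x \<in> space borel. c < \<eta> a x} \<in> sets borel" using eta_meas[of a] by measurable
  thus ?thesis by simp
qed

lemma sets_ge: "{x. c \<le> \<eta> a x} \<in> sets borel"
proof -
  have "{x \<in> space borel. c \<le> \<eta> a x} \<in> sets borel" using eta_meas[of a] by measurable
  thus ?thesis by simp
qed

lemma pA_mu: "pA P a = mu P a UNIV"
  unfolding pA_def mu_def by simp

lemma pA_le1: "pA P a \<le> 1"
  unfolding pA_def by simp

lemma mu_mono: "S \<subseteq> S' \<Longrightarrow> S' \<in> sets borel \<Longrightarrow> mu P a S \<le> mu P a S'"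
  unfolding mu_def by (intro PS.finite_measure_mono Wset) auto

lemma mu_nonneg: "0 \<le> mu P a S" unfolding mu_def by simp

lemma mu_le_pA: "mu P a S \<le> pA P a"
proof -
  have "mu P a S \<le> mu P a UNIV" unfolding mu_def by (intro PS.finite_measure_mono Wset) auto
  thus ?thesis by (simp add: pA_mu)
qed

lemma condX_mu: "condX P a S = mu P a S / pA P a"
  unfolding condX_def mu_def by simp

lemma condX_mono: "S \<subseteq> S' \<Longrightarrow> S' \<in> sets borel \<Longrightarrow> condX P a S \<le> condX P a S'"
  unfolding condX_mu using pApos[of a] by (intro divide_right_mono mu_mono) auto

lemma condX_01: "0 \<le> condX P a S" "condX P a S \<le> 1"
  unfolding condX_mu using pApos[of a] mu_le_pA[of a S] mu_nonneg[of a S] by auto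

lemma condX_UNIV: "condX P a UNIV = 1"
  unfolding condX_mu using pApos[of a] by (simp add: pA_mu[symmetric])

lemma condX_empty: "condX P a {} = 0"
  unfolding condX_mu mu_def by simp

lemma lev_T: "lev P True t = 1/2 + t / (2 * pA P True)"
  by (simp add: lev_def sgnA_def)
lemma lev_F: "lev P False t = 1/2 - t / (2 * pA P False)"
  by (simp add: lev_def sgnA_def)

lemma Dm_lev: "Dm P \<eta> t = condX P True {x. \<eta> True x > lev P True t} - condX P False {x. \<eta> False x \<ge> lev P False t}"
  by (simp add: Dm_def lev_T lev_F)
lemma Dp_lev: "Dp P \<eta> t = condX P True {x. \<eta> True x \<ge> lev P True t} - condX P False {x. \<eta> False x > lev P False t}"
  by (simp add: Dp_def lev_T lev_F)

lemma lev_T_mono: "t \<le> t' \<Longrightarrow> lev P True t \<le> lev P True t'"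
  unfolding lev_T using pApos[of True] by (intro add_left_mono divide_right_mono) auto
lemma lev_F_mono: "t \<le> t' \<Longrightarrow> lev P False t' \<le> lev P False t"
  unfolding lev_F using pApos[of False] by (intro diff_left_mono divide_right_mono) auto
lemma lev_T_smono: "t < t' \<Longrightarrow> lev P True t < lev P True t'"
  unfolding lev_T using pApos[of True] by (intro add_strict_left_mono divide_strict_right_mono) auto
lemma lev_F_smono: "t < t' \<Longrightarrow> lev P False t' < lev P False t"
  unfolding lev_F using pApos[of False] by (intro diff_strict_left_mono divide_strict_right_mono) auto

lemma Dm_mono: "t \<le> t' \<Longrightarrow> Dm P \<eta> t' \<le> Dm P \<eta> t"
proof -
  assume tt: "t \<le> t'"
  have 1: "condX P True {x. \<eta> True x > lev P True t'} \<le> condX P True {x. \<eta> True x > lev P True t}"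
    using lev_T_mono[OF tt] by (intro condX_mono sets_gt) auto
  have 2: "condX P False {x. \<eta> False x \<ge> lev P False t} \<le> condX P False {x. \<eta> False x \<ge> lev P False t'}"
    using lev_F_mono[OF tt] by (intro condX_mono sets_ge) auto
  show ?thesis unfolding Dm_lev using 1 2 by simp
qed

lemma Dp_mono: "t \<le> t' \<Longrightarrow> Dp P \<eta> t' \<le> Dp P \<eta> t"
proof -
  assume tt: "t \<le> t'"
  have 1: "condX P True {x. \<eta> True x \<ge> lev P True t'} \<le> condX P True {x. \<eta> True x \<ge> lev P True t}"
    using lev_T_mono[OF tt] by (intro condX_mono sets_ge) auto
  have 2: "condX P False {x. \<eta> False x > lev P False t} \<le> condX P False {x. \<eta> False x > lev P False t'}"
    using lev_F_mono[OF tt] by (intro condX_mono sets_gt) auto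
  show ?thesis unfolding Dp_lev using 1 2 by simp
qed

lemma Dm_le_Dp: "Dm P \<eta> t \<le> Dp P \<eta> t"
proof -
  have 1: "condX P True {x. \<eta> True x > lev P True t} \<le> condX P True {x. \<eta> True x \<ge> lev P True t}"
    by (intro condX_mono sets_ge) auto
  have 2: "condX P False {x. \<eta> False x > lev P False t} \<le> condX P False {x. \<eta> False x \<ge> lev P False t}"
    by (intro condX_mono sets_ge) auto
  show ?thesis unfolding Dm_lev Dp_lev using 1 2 by simp
qed

lemma Dp_le_Dm: "t' < t \<Longrightarrow> Dp P \<eta> t \<le> Dm P \<eta> t'"
proof -
  assume tt: "t' < t"
  have 1: "condX P True {x. \<eta> True x \<ge> lev P True t} \<le> condX P True {x. \<eta> True x > lev P True t'}"
    using lev_T_smono[OF tt] by (intro condX_mono sets_gt) auto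
  have 2: "condX P False {x. \<eta> False x \<ge> lev P False t'} \<le> condX P False {x. \<eta> False x > lev P False t}"
    using lev_F_smono[OF tt] by (intro condX_mono sets_gt) auto
  show ?thesis unfolding Dm_lev Dp_lev using 1 2 by simp
qed

lemma lev_big: "t > 1 \<Longrightarrow> lev P True t > 1 \<and> lev P False t < 0"
proof -
  assume t: "t > 1"
  have "t / (2 * pA P a) > 1/2" for a
  proof -
    have "2 * pA P a \<le> 2" using pA_le1[of a] by simp
    hence "2 * pA P a < 2 * t" using t by simp
    thus ?thesis using pApos[of a] by (simp add: field_simps)
  qed
  from this[of True] this[of False] show ?thesis unfolding lev_T lev_F by linarith
qed

lemma Dm_big: "t > 1 \<Longrightarrow> Dm P \<eta> t = -1"
proof -
  assume t: "t > 1"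
  have 1: "{x. \<eta> True x > lev P True t} = {}" using lev_big[OF t] eta_01[of True] by (smt (verit) empty_Collect_eq)
  have 2: "{x. \<eta> False x \<ge> lev P False t} = UNIV" using lev_big[OF t] eta_01[of False] by (smt (verit) UNIV_eq_I mem_Collect_eq)
  show ?thesis unfolding Dm_lev 1 2 condX_empty condX_UNIV by simp
qed

lemma Dp_big: "t > 1 \<Longrightarrow> Dp P \<eta> t = -1"
proof -
  assume t: "t > 1"
  have 1: "{x. \<eta> True x \<ge> lev P True t} = {}" using lev_big[OF t] eta_01[of True] by (smt (verit) empty_Collect_eq)
  have 2: "{x. \<eta> False x > lev P False t} = UNIV" using lev_big[OF t] eta_01[of False] by (smt (verit) UNIV_eq_I mem_Collect_eq)
  show ?thesis unfolding Dp_lev 1 2 condX_empty condX_UNIV by simp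
qed

end


locale pop_margin = pop +
  fixes \<delta> \<gamma> e0 U :: real
  assumes dpos: "0 \<le> \<delta>" and gpos: "0 < \<gamma>" and e0pos: "e0 > 0" and Upos: "U > 0"
  and mcond: "\<And>\<epsilon>. 0 < \<epsilon> \<Longrightarrow> \<epsilon> < e0 \<Longrightarrow>
        max (gm P \<eta> \<delta> \<epsilon>) (gp P \<eta> \<delta> \<epsilon>) \<le> U * \<epsilon> powr \<gamma>
      \<and> (Dm P \<eta> (tstar P \<eta> \<delta>) = \<delta> \<longrightarrow> gm P \<eta> \<delta> \<epsilon> \<ge> \<epsilon> powr \<gamma> / U)
      \<and> (Dp P \<eta> (tstar P \<eta> \<delta>) = \<delta> \<longrightarrow> gp P \<eta> \<delta> \<epsilon> \<ge> \<epsilon> powr \<gamma> / U)"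
begin

abbreviation "T \<equiv> tstar P \<eta> \<delta>"

lemma gm_up: "0 < x \<Longrightarrow> x < e0 \<Longrightarrow> gm P \<eta> \<delta> x \<le> U * x powr \<gamma>"
  using mcond[of x] by simp
lemma gp_up: "0 < x \<Longrightarrow> x < e0 \<Longrightarrow> gp P \<eta> \<delta> x \<le> U * x powr \<gamma>"
  using mcond[of x] by simp
lemma gm_low: "0 < x \<Longrightarrow> x < e0 \<Longrightarrow> Dm P \<eta> T = \<delta> \<Longrightarrow> gm P \<eta> \<delta> x \<ge> x powr \<gamma> / U"
  using mcond[of x] by simp
lemma gp_low: "0 < x \<Longrightarrow> x < e0 \<Longrightarrow> Dp P \<eta> T = \<delta> \<Longrightarrow> gp P \<eta> \<delta> x \<ge> x powr \<gamma> / U"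
  using mcond[of x] by simp

lemma gm_mono: "x \<le> y \<Longrightarrow> gm P \<eta> \<delta> x \<le> gm P \<eta> \<delta> y"
  unfolding gm_def using Dm_mono[of "T + x" "T + y"] by simp
lemma gp_mono: "x \<le> y \<Longrightarrow> gp P \<eta> \<delta> x \<le> gp P \<eta> \<delta> y"
  unfolding gp_def using Dp_mono[of "T - y" "T - x"] by simp
lemma gm_nonneg: "0 \<le> x \<Longrightarrow> 0 \<le> gm P \<eta> \<delta> x"
  using gm_mono[of 0 x] by (simp add: gm_def)
lemma gp_nonneg: "0 \<le> x \<Longrightarrow> 0 \<le> gp P \<eta> \<delta> x"
  using gp_mono[of 0 x] by (simp add: gp_def)

definition "Sd = {t. Dm P \<eta> t < \<delta>}"

lemma Sd_ne: "2 \<in> Sd" unfolding Sd_def using Dm_big[of 2] dpos by simp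

lemma Sd_pos: "Dm P \<eta> 0 > \<delta> \<Longrightarrow> t \<in> Sd \<Longrightarrow> t \<ge> 0"
proof (rule ccontr)
  assume "Dm P \<eta> 0 > \<delta>" "t \<in> Sd" "\<not> t \<ge> 0"
  then have "Dm P \<eta> 0 \<le> Dm P \<eta> t" using Dm_mono[of t 0] by simp
  with \<open>Dm P \<eta> 0 > \<delta>\<close> \<open>t \<in> Sd\<close> show False unfolding Sd_def by simp
qed

lemma Sd_bdd: "Dm P \<eta> 0 > \<delta> \<Longrightarrow> bdd_below Sd"
  using Sd_pos by (auto intro!: bdd_belowI[where m=0])

lemma T_pos_case: "Dm P \<eta> 0 > \<delta> \<Longrightarrow> T = Inf Sd"
  unfolding tstar_def Sd_def by simp
lemma T_zero_case: "\<not> Dm P \<eta> 0 > \<delta> \<Longrightarrow> T = 0"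
  unfolding tstar_def by simp

lemma T_nonneg: "T \<ge> 0"
proof (cases "Dm P \<eta> 0 > \<delta>")
  case True
  have "0 \<le> Inf Sd" using Sd_ne Sd_pos[OF True] by (intro cInf_greatest) auto
  thus ?thesis using T_pos_case[OF True] by simp
qed (simp add: T_zero_case)

lemma Dm_after_le: "t > T \<Longrightarrow> Dm P \<eta> t \<le> \<delta>"
proof (cases "Dm P \<eta> 0 > \<delta>")
  case True
  assume t: "t > T"
  have "Inf Sd < t" using t T_pos_case[OF True] by simp
  then obtain s where "s \<in> Sd" "s < t" using cInf_less_iff[of Sd t] Sd_ne Sd_bdd[OF True] by auto
  thus ?thesis using Dm_mono[of s t] unfolding Sd_def by simp
next
  case False
  assume t: "t > T"
  thus ?thesis using False T_zero_case[OF False] Dm_mono[of 0 t] by simp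
qed

lemma Dm_T_le: "Dm P \<eta> T \<le> \<delta>"
proof -
  have "Dm P \<eta> T - \<delta> \<le> 0"
  proof (rule small_powr_le0[OF e0pos Upos gpos])
    fix x assume x: "0 < x" "x < e0"
    have "Dm P \<eta> T = Dm P \<eta> (T + x) + gm P \<eta> \<delta> x" unfolding gm_def by simp
    also have "\<dots> \<le> \<delta> + U * x powr \<gamma>" using Dm_after_le[of "T+x"] gm_up[OF x] x by simp
    finally show "Dm P \<eta> T - \<delta> \<le> U * x powr \<gamma>" by simp
  qed
  thus ?thesis by simp
qed

lemma T_pos_iff: "T > 0 \<longleftrightarrow> Dm P \<eta> 0 > \<delta>"
proof
  assume "T > 0" thus "Dm P \<eta> 0 > \<delta>" using T_zero_case by fastforce
next
  assume d: "Dm P \<eta> 0 > \<delta>"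
  show "T > 0"
  proof (rule ccontr)
    assume "\<not> T > 0" hence "T = 0" using T_nonneg by simp
    thus False using Dm_T_le d by simp
  qed
qed

lemma Dm_after_lt: "t > T \<Longrightarrow> Dm P \<eta> t < \<delta>"
proof -
  assume t: "t > T"
  show ?thesis
  proof (cases "Dm P \<eta> T < \<delta>")
    case True thus ?thesis using Dm_mono[of T t] t by simp
  next
    case False
    hence eq: "Dm P \<eta> T = \<delta>" using Dm_T_le by simp
    define x where "x = min (t - T) (e0/2)"
    have x: "0 < x" "x < e0" "x \<le> t - T" using t e0pos by (auto simp: x_def)
    have "gm P \<eta> \<delta> x \<ge> x powr \<gamma> / U" by (rule gm_low[OF x(1,2) eq])
    moreover have "x powr \<gamma> / U > 0" using x Upos by simp
    ultimately have "Dm P \<eta> (T + x) < \<delta>" using eq unfolding gm_def by simp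
    moreover have "Dm P \<eta> t \<le> Dm P \<eta> (T + x)" using x by (intro Dm_mono) simp
    ultimately show ?thesis by simp
  qed
qed

lemma Dm_before: "0 \<le> t \<Longrightarrow> t < T \<Longrightarrow> Dm P \<eta> t \<ge> \<delta>"
proof (rule ccontr)
  assume t0: "0 \<le> t" and t: "t < T" and n: "\<not> Dm P \<eta> t \<ge> \<delta>"
  have d: "Dm P \<eta> 0 > \<delta>" using t t0 T_pos_iff by simp
  have "t \<in> Sd" using n unfolding Sd_def by simp
  hence "Inf Sd \<le> t" using Sd_bdd[OF d] by (rule cInf_lower)
  thus False using t T_pos_case[OF d] by simp
qed

lemma Dp_T_ge: "T > 0 \<Longrightarrow> Dp P \<eta> T \<ge> \<delta>"
proof -
  assume T: "T > 0"
  have "\<delta> - Dp P \<eta> T \<le> 0"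
  proof (rule small_powr_le0[of "min e0 T"])
    show "min e0 T > 0" using T e0pos by simp
    show "U > 0" "\<gamma> > 0" using Upos gpos by auto
    fix x assume x: "0 < x" "x < min e0 T"
    have 1: "Dp P \<eta> T = Dp P \<eta> (T - x) - gp P \<eta> \<delta> x" unfolding gp_def by simp
    have 2: "Dp P \<eta> (T - x) \<ge> Dm P \<eta> (T - x)" by (rule Dm_le_Dp)
    have 3: "Dm P \<eta> (T - x) \<ge> \<delta>" using x by (intro Dm_before) simp_all
    have "Dp P \<eta> T \<ge> \<delta> - gp P \<eta> \<delta> x" using 1 2 3 by simp
    moreover have "gp P \<eta> \<delta> x \<le> U * x powr \<gamma>" using x by (intro gp_up) auto
    ultimately show "\<delta> - Dp P \<eta> T \<le> U * x powr \<gamma>" by simp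
  qed
  thus ?thesis by simp
qed

end

definition cnt :: "nat \<Rightarrow> (nat \<Rightarrow> 'x \<times> bool \<times> bool) \<Rightarrow> bool \<Rightarrow> 'x set \<Rightarrow> nat" where
  "cnt n s a S = card {i. i < n \<and> fst (snd (s i)) = a \<and> fst (s i) \<in> S}"

lemma sum_if_card: fixes n :: nat shows "(\<Sum>i\<in>{i. i < n \<and> Q i}. (if R i then 1 else 0::real)) = real (card {i. i < n \<and> Q i \<and> R i})"
proof -
  have "(\<Sum>i\<in>{i. i < n \<and> Q i}. (if R i then 1 else 0::real)) = real (card ({i. i < n \<and> Q i} \<inter> {i. R i}))"
  proof -
    have fin: "finite {i. i < n \<and> Q i}" by (rule finite_subset[where B="{..<n}"]) auto
    show ?thesis using sum.If_cases[OF fin, of R "\<lambda>_. 1::real" "\<lambda>_. 0"] by simp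
  qed
  also have "{i. i < n \<and> Q i} \<inter> {i. R i} = {i. i < n \<and> Q i \<and> R i}" by auto
  finally show ?thesis .
qed

lemma Dhat_form:
  assumes "n > 0"
  shows "Dhat eh n s t =
     real (card {i. i < n \<and> fst (snd (s i)) = True \<and> eh n True s (fst (s i)) > 1/2 + t / (2 * (real (ncount n s True) / n))}) / real (ncount n s True)
   - real (card {i. i < n \<and> fst (snd (s i)) = False \<and> eh n False s (fst (s i)) > 1/2 - t / (2 * (real (ncount n s False) / n))}) / real (ncount n s False)"
proof -
  have r: "real n * t / (2 * real m) = t / (2 * (real m / real n))" for m using assms by (simp add: field_simps)
  show ?thesis unfolding Dhat_def r
    using sum_if_card[where n=n and Q="\<lambda>i. fst (snd (s i))"] sum_if_card[where n=n and Q="\<lambda>i. \<not> fst (snd (s i))"]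
    by simp
qed

lemma card_le_cnt:
  assumes "\<And>i. i < n \<Longrightarrow> fst (snd (s i)) = a \<Longrightarrow> Q i \<Longrightarrow> fst (s i) \<in> S"
  shows "card {i. i < n \<and> fst (snd (s i)) = a \<and> Q i} \<le> cnt n s a S"
  unfolding cnt_def by (rule card_mono) (use assms in auto)

lemma cnt_le_card:
  assumes "\<And>i. i < n \<Longrightarrow> fst (snd (s i)) = a \<Longrightarrow> fst (s i) \<in> S \<Longrightarrow> Q i"
  shows "cnt n s a S \<le> card {i. i < n \<and> fst (snd (s i)) = a \<and> Q i}"
  unfolding cnt_def by (rule card_mono) (use assms in auto)

context pop
begin

abbreviation "pmin \<equiv> min (pA P True) (pA P False)"

lemma pmin_pos: "pmin > 0" using pApos[of True] pApos[of False] by simp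

lemma Dhat_bounds:
  fixes eh :: "nat \<Rightarrow> bool \<Rightarrow> (nat \<Rightarrow> 'x \<times> bool \<times> bool) \<Rightarrow> 'x \<Rightarrow> real"
  assumes n: "1 \<le> n" and t: "0 \<le> t" "t \<le> B"
    and tau: "\<tau> \<le> pmin/2"
    and q: "\<And>a. \<bar>real (ncount n s a) / n - pA P a\<bar> \<le> \<tau>"
    and e: "0 \<le> e"
    and close: "\<And>a i. i < n \<Longrightarrow> fst (snd (s i)) = a \<Longrightarrow> \<bar>eh n a s (fst (s i)) - \<eta> a (fst (s i))\<bar> \<le> e"
    and kap: "\<kappa> \<ge> 2*e + 2*B*\<tau>/pmin"
    and empm: "\<And>a. \<bar>real (cnt n s a {x. \<eta> a x > lev P a (t - \<kappa>)}) / n - mu P a {x. \<eta> a x > lev P a (t - \<kappa>)}\<bar> \<le> \<tau>"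
    and empp: "\<And>a. \<bar>real (cnt n s a {x. \<eta> a x > lev P a (t + \<kappa>)}) / n - mu P a {x. \<eta> a x > lev P a (t + \<kappa>)}\<bar> \<le> \<tau>"
  shows "Dhat eh n s t \<le> Dp P \<eta> (t - \<kappa>) + 8/pmin * \<tau>"
    and "Dhat eh n s t \<ge> Dm P \<eta> (t + \<kappa>) - 8/pmin * \<tau>"
proof -
  define q where "q a = real (ncount n s a) / n" for a
  have np: "n > 0" using n by simp
  have pm: "0 < pmin" "pmin \<le> pA P a" "pA P a \<le> 1" for a
    using pmin_pos pA_le1[of a] by (cases a; simp)+
  have tau': "\<tau> \<le> pA P a / 2" for a
  proof -
    have "pmin \<le> pA P a" by (rule pm(2))
    thus ?thesis using tau by linarith
  qed
  have qa: "\<bar>q a - pA P a\<bar> \<le> \<tau>" for a using q[of a] by (simp add: q_def)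
  have qpos: "q a > 0" for a using qa[of a] tau'[of a] pApos[of a] by linarith
  have ncpos: "real (ncount n s a) > 0" for a using qpos[of a] np by (simp add: q_def zero_less_divide_iff)
  have thr: "(t - \<kappa>)/(2*pA P a) \<le> t/(2*q a) - e" "t/(2*q a) + e \<le> (t + \<kappa>)/(2*pA P a)" for a
    using thresh_bounds[OF pm(1) pm(2)[of a] pm(3)[of a] qa[of a] tau'[of a] t e kap] by auto
  have div: "real k / real (ncount n s a) = (real k / n) / q a" for k a
    using np ncpos[of a] by (simp add: q_def field_simps)
  have rb: "real (cnt n s a S) / n / q a \<le> mu P a S / pA P a + 4*\<tau>/pA P a"
           "real (cnt n s a S) / n / q a \<ge> mu P a S / pA P a - 4*\<tau>/pA P a"
    if "\<bar>real (cnt n s a S) / n - mu P a S\<bar> \<le> \<tau>" for a S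
    using ratio_bounds[OF mu_nonneg mu_le_pA qa[of a] tau'[of a] that pApos[of a]] by auto
  have tp: "4*\<tau>/pA P a \<le> 4*\<tau>/pmin" for a
  proof -
    have "\<tau> \<ge> 0" using qa[of a] by simp
    thus ?thesis using pm(1) pm(2)[of a] by (intro divide_left_mono) auto
  qed
  note form = Dhat_form[OF np, of eh s t, folded q_def]
  let ?S1 = "{x. \<eta> True x > lev P True (t - \<kappa>)}"
  let ?S0 = "{x. \<eta> False x > lev P False (t - \<kappa>)}"
  have c1: "card {i. i < n \<and> fst (snd (s i)) = True \<and> eh n True s (fst (s i)) > 1/2 + t / (2 * q True)} \<le> cnt n s True ?S1"
  proof (rule card_le_cnt)
    fix i assume i: "i < n" "fst (snd (s i)) = True" and h: "eh n True s (fst (s i)) > 1/2 + t / (2 * q True)"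
    have "\<eta> True (fst (s i)) \<ge> eh n True s (fst (s i)) - e" using close[OF i] by simp
    thus "fst (s i) \<in> ?S1" using h thr(1)[of True] by (simp add: lev_T)
  qed
  have c0: "cnt n s False ?S0 \<le> card {i. i < n \<and> fst (snd (s i)) = False \<and> eh n False s (fst (s i)) > 1/2 - t / (2 * q False)}"
  proof (rule cnt_le_card)
    fix i assume i: "i < n" "fst (snd (s i)) = False" and h: "fst (s i) \<in> ?S0"
    have "eh n False s (fst (s i)) \<ge> \<eta> False (fst (s i)) - e" using close[OF i] by simp
    thus "eh n False s (fst (s i)) > 1/2 - t / (2 * q False)" using h thr(1)[of False] by (simp add: lev_F)
  qed
  have t1: "real (card {i. i < n \<and> fst (snd (s i)) = True \<and> eh n True s (fst (s i)) > 1/2 + t / (2 * q True)}) / real (ncount n s True)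
      \<le> condX P True ?S1 + 4*\<tau>/pmin"
  proof -
    have "real (card {i. i < n \<and> fst (snd (s i)) = True \<and> eh n True s (fst (s i)) > 1/2 + t / (2 * q True)}) / real (ncount n s True)
        \<le> real (cnt n s True ?S1) / real (ncount n s True)"
      using c1 ncpos[of True] by (intro divide_right_mono) auto
    also have "\<dots> = real (cnt n s True ?S1) / n / q True" by (rule div)
    also have "\<dots> \<le> mu P True ?S1 / pA P True + 4*\<tau>/pA P True" by (rule rb(1)[OF empm[of True]])
    finally show ?thesis using tp[of True] by (simp add: condX_mu)
  qed
  have t0: "real (card {i. i < n \<and> fst (snd (s i)) = False \<and> eh n False s (fst (s i)) > 1/2 - t / (2 * q False)}) / real (ncount n s False)
      \<ge> condX P False ?S0 - 4*\<tau>/pmin"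
  proof -
    have "real (card {i. i < n \<and> fst (snd (s i)) = False \<and> eh n False s (fst (s i)) > 1/2 - t / (2 * q False)}) / real (ncount n s False)
        \<ge> real (cnt n s False ?S0) / real (ncount n s False)"
      using c0 ncpos[of False] by (intro divide_right_mono) auto
    moreover have "real (cnt n s False ?S0) / real (ncount n s False) = real (cnt n s False ?S0) / n / q False" by (rule div)
    moreover have "real (cnt n s False ?S0) / n / q False \<ge> mu P False ?S0 / pA P False - 4*\<tau>/pA P False" by (rule rb(2)[OF empm[of False]])
    ultimately show ?thesis using tp[of False] by (simp add: condX_mu)
  qed
  have cmp1: "condX P True ?S1 \<le> condX P True {x. \<eta> True x \<ge> lev P True (t - \<kappa>)}"
    by (intro condX_mono sets_ge) auto
  show "Dhat eh n s t \<le> Dp P \<eta> (t - \<kappa>) + 8/pmin * \<tau>"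
    unfolding form Dp_lev using t1 t0 cmp1 by simp
  let ?R1 = "{x. \<eta> True x > lev P True (t + \<kappa>)}"
  let ?R0 = "{x. \<eta> False x > lev P False (t + \<kappa>)}"
  have d1: "cnt n s True ?R1 \<le> card {i. i < n \<and> fst (snd (s i)) = True \<and> eh n True s (fst (s i)) > 1/2 + t / (2 * q True)}"
  proof (rule cnt_le_card)
    fix i assume i: "i < n" "fst (snd (s i)) = True" and h: "fst (s i) \<in> ?R1"
    have "eh n True s (fst (s i)) \<ge> \<eta> True (fst (s i)) - e" using close[OF i] by simp
    thus "eh n True s (fst (s i)) > 1/2 + t / (2 * q True)" using h thr(2)[of True] by (simp add: lev_T)
  qed
  have d0: "card {i. i < n \<and> fst (snd (s i)) = False \<and> eh n False s (fst (s i)) > 1/2 - t / (2 * q False)} \<le> cnt n s False ?R0"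
  proof (rule card_le_cnt)
    fix i assume i: "i < n" "fst (snd (s i)) = False" and h: "eh n False s (fst (s i)) > 1/2 - t / (2 * q False)"
    have "\<eta> False (fst (s i)) \<ge> eh n False s (fst (s i)) - e" using close[OF i] by simp
    thus "fst (s i) \<in> ?R0" using h thr(2)[of False] by (simp add: lev_F)
  qed
  have u1: "real (card {i. i < n \<and> fst (snd (s i)) = True \<and> eh n True s (fst (s i)) > 1/2 + t / (2 * q True)}) / real (ncount n s True)
      \<ge> condX P True ?R1 - 4*\<tau>/pmin"
  proof -
    have "real (card {i. i < n \<and> fst (snd (s i)) = True \<and> eh n True s (fst (s i)) > 1/2 + t / (2 * q True)}) / real (ncount n s True)
        \<ge> real (cnt n s True ?R1) / real (ncount n s True)"
      using d1 ncpos[of True] by (intro divide_right_mono) auto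
    moreover have "real (cnt n s True ?R1) / real (ncount n s True) = real (cnt n s True ?R1) / n / q True" by (rule div)
    moreover have "real (cnt n s True ?R1) / n / q True \<ge> mu P True ?R1 / pA P True - 4*\<tau>/pA P True" by (rule rb(2)[OF empp[of True]])
    ultimately show ?thesis using tp[of True] by (simp add: condX_mu)
  qed
  have u0: "real (card {i. i < n \<and> fst (snd (s i)) = False \<and> eh n False s (fst (s i)) > 1/2 - t / (2 * q False)}) / real (ncount n s False)
      \<le> condX P False ?R0 + 4*\<tau>/pmin"
  proof -
    have "real (card {i. i < n \<and> fst (snd (s i)) = False \<and> eh n False s (fst (s i)) > 1/2 - t / (2 * q False)}) / real (ncount n s False)
        \<le> real (cnt n s False ?R0) / real (ncount n s False)"
      using d0 ncpos[of False] by (intro divide_right_mono) auto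
    also have "\<dots> = real (cnt n s False ?R0) / n / q False" by (rule div)
    also have "\<dots> \<le> mu P False ?R0 / pA P False + 4*\<tau>/pA P False" by (rule rb(1)[OF empp[of False]])
    finally show ?thesis using tp[of False] by (simp add: condX_mu)
  qed
  have cmp0: "condX P False ?R0 \<le> condX P False {x. \<eta> False x \<ge> lev P False (t + \<kappa>)}"
    by (intro condX_mono sets_ge) auto
  show "Dhat eh n s t \<ge> Dm P \<eta> (t + \<kappa>) - 8/pmin * \<tau>"
    unfolding form Dm_lev using u1 u0 cmp0 by simp
qed

end

definition lv :: "(real \<Rightarrow> real) \<Rightarrow> real \<Rightarrow> real" where
  "lv D c = Inf {t. 0 \<le> t \<and> D t < c}"

definition sel :: "real \<Rightarrow> real \<Rightarrow> real \<Rightarrow> real \<Rightarrow> real" where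
  "sel tmid tmin tmax r = (if tmid - tmin \<le> r then tmin else if tmax - tmid \<le> r then tmax else tmid)"

lemma that_sel: "that eh n s \<delta> \<Delta> r = sel (lv (Dhat eh n s) \<delta>) (lv (Dhat eh n s) (\<delta> + \<Delta>)) (lv (Dhat eh n s) (\<delta> - \<Delta>)) r"
  unfolding that_def sel_def lv_def tlevel_def Let_def by simp

lemma lv_le: "0 \<le> t0 \<Longrightarrow> D t0 < c \<Longrightarrow> lv D c \<le> t0"
  unfolding lv_def by (rule cInf_lower) (auto intro!: bdd_belowI[where m=0])

lemma lv_nonneg: "0 \<le> t0 \<Longrightarrow> D t0 < c \<Longrightarrow> lv D c \<ge> 0"
  unfolding lv_def by (rule cInf_greatest) auto

lemma lv_ge:
  assumes mono: "\<And>x y. 0 \<le> x \<Longrightarrow> x \<le> y \<Longrightarrow> D y \<le> D x"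
  assumes "0 \<le> u" "D u \<ge> c" "0 \<le> w" "D w < c"
  shows "lv D c \<ge> u"
  unfolding lv_def
proof (rule cInf_greatest)
  show "{t. 0 \<le> t \<and> D t < c} \<noteq> {}" using assms by auto
  fix t assume t: "t \<in> {t. 0 \<le> t \<and> D t < c}"
  show "u \<le> t"
  proof (rule ccontr)
    assume "\<not> u \<le> t"
    hence "D u \<le> D t" using t by (intro mono) auto
    thus False using t assms by simp
  qed
qed

lemma sel_cases: "sel a b c r = a \<or> sel a b c r = b \<or> sel a b c r = c"
  unfolding sel_def by auto

locale estim =
  fixes D :: "real \<Rightarrow> real" and T \<epsilon>' r \<delta> \<Delta> :: real
  assumes mono: "\<And>x y. 0 \<le> x \<Longrightarrow> x \<le> y \<Longrightarrow> D y \<le> D x"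
  and T: "0 \<le> T" and ep: "0 < \<epsilon>'" "\<epsilon>' \<le> r/2" and Dl: "0 < \<Delta>"
begin

abbreviation "tmid \<equiv> lv D \<delta>"
abbreviation "tmin \<equiv> lv D (\<delta> + \<Delta>)"
abbreviation "tmax \<equiv> lv D (\<delta> - \<Delta>)"
abbreviation "th \<equiv> sel tmid tmin tmax r"

lemma caseA:
  assumes "T - 2*r \<ge> 0" "D (T + \<epsilon>') < \<delta>" "D (T - \<epsilon>') \<ge> \<delta>" "D (T - 2*r) < \<delta> + \<Delta>"
    "D (T + 2*r) \<ge> \<delta> - \<Delta>" "0 \<le> tb" "D tb < \<delta> - \<Delta>"
  shows "\<bar>th - T\<bar> \<le> \<epsilon>'"
proof -
  have r: "r > 0" using ep by simp
  have a1: "tmid \<le> T + \<epsilon>'" using assms ep by (intro lv_le) auto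
  have a2: "tmid \<ge> T - \<epsilon>'" using assms ep r by (intro lv_ge[where w="T + \<epsilon>'", OF mono]) auto
  have a3: "tmin \<le> T - 2*r" using assms by (intro lv_le) auto
  have a4: "tmax \<ge> T + 2*r" using assms r T by (intro lv_ge[where w=tb, OF mono]) auto
  have "\<not> tmid - tmin \<le> r" using a2 a3 ep by simp
  moreover have "\<not> tmax - tmid \<le> r" using a1 a4 ep by simp
  ultimately have "th = tmid" unfolding sel_def by simp
  thus ?thesis using a1 a2 by simp
qed

lemma all_in:
  assumes "D (T + \<epsilon>') < \<delta> - \<Delta>" "T - \<epsilon>' \<le> 0 \<or> D (T - \<epsilon>') \<ge> \<delta> + \<Delta>"
  shows "\<bar>th - T\<bar> \<le> \<epsilon>'"
proof -
  have tp: "0 \<le> T + \<epsilon>'" using T ep by simp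
  have up: "lv D c \<le> T + \<epsilon>'" if "c \<ge> \<delta> - \<Delta>" for c using assms(1) that tp by (intro lv_le) auto
  have lo: "lv D c \<ge> T - \<epsilon>'" if "c \<le> \<delta> + \<Delta>" "c \<ge> \<delta> - \<Delta>" for c
  proof (cases "T - \<epsilon>' \<le> 0")
    case True
    have "lv D c \<ge> 0" using assms(1) that tp by (intro lv_nonneg) auto
    thus ?thesis using True by simp
  next
    case False
    hence "D (T - \<epsilon>') \<ge> \<delta> + \<Delta>" using assms(2) by simp
    thus ?thesis using assms(1) that tp False by (intro lv_ge[where w="T + \<epsilon>'", OF mono]) auto
  qed
  have "\<bar>lv D c - T\<bar> \<le> \<epsilon>'" if "c \<le> \<delta> + \<Delta>" "c \<ge> \<delta> - \<Delta>" for c using up[of c] lo[of c] that by auto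
  from this[of \<delta>] this[of "\<delta>+\<Delta>"] this[of "\<delta>-\<Delta>"] show ?thesis using sel_cases[of tmid tmin tmax r] Dl by auto
qed

lemma caseB1:
  assumes "T - 2*r \<ge> 0" "D (T + \<epsilon>') < \<delta> - \<Delta>" "D (T - \<epsilon>') \<ge> \<delta> - \<Delta>" "D (T - 2*r) < \<delta> + \<Delta>"
    "D (T - r/2) \<ge> \<delta>"
  shows "\<bar>th - T\<bar> \<le> \<epsilon>'"
proof -
  have r: "r > 0" using ep by simp
  have tp: "0 \<le> T + \<epsilon>'" using T ep by simp
  have a1: "tmax \<le> T + \<epsilon>'" using assms tp by (intro lv_le) auto
  have a1': "tmid \<le> T + \<epsilon>'" using assms tp Dl by (intro lv_le) auto
  have a2: "tmax \<ge> T - \<epsilon>'" using assms ep r tp by (intro lv_ge[where w="T + \<epsilon>'", OF mono]) auto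
  have a3: "tmin \<le> T - 2*r" using assms by (intro lv_le) auto
  have a4: "tmid \<ge> T - r/2" using assms r tp Dl by (intro lv_ge[where w="T + \<epsilon>'", OF mono]) auto
  have "\<not> tmid - tmin \<le> r" using a4 a3 r by simp
  moreover have "tmax - tmid \<le> r" using a1 a4 ep by simp
  ultimately have "th = tmax" unfolding sel_def by simp
  thus ?thesis using a1 a2 by simp
qed

lemma caseB2:
  assumes "T - \<epsilon>' \<le> 0 \<or> D (T - \<epsilon>') \<ge> \<delta> + \<Delta>" "D (T + \<epsilon>') < \<delta> + \<Delta>" "D (T + r/2) < \<delta>"
  shows "\<bar>th - T\<bar> \<le> \<epsilon>'"
proof -
  have r: "r > 0" using ep by simp
  have tp: "0 \<le> T + \<epsilon>'" using T ep by simp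
  have a1: "tmin \<le> T + \<epsilon>'" using assms tp by (intro lv_le) auto
  have a2: "tmin \<ge> T - \<epsilon>'"
  proof (cases "T - \<epsilon>' \<le> 0")
    case True
    have "tmin \<ge> 0" using assms(2) tp by (intro lv_nonneg) auto
    thus ?thesis using True by simp
  next
    case False
    hence "D (T - \<epsilon>') \<ge> \<delta> + \<Delta>" using assms(1) by simp
    thus ?thesis using assms(2) tp False by (intro lv_ge[where w="T + \<epsilon>'", OF mono]) auto
  qed
  have a3: "tmid \<le> T + r/2" using assms T r by (intro lv_le) auto
  have "tmid - tmin \<le> r" using a2 a3 ep by simp
  hence "th = tmin" unfolding sel_def by simp
  thus ?thesis using a1 a2 by simp
qed

end

lemma final_arith:
  fixes pm p q \<tau> x T \<epsilon> :: real
  assumes "0 < pm" "pm \<le> p" "\<bar>q - p\<bar> \<le> \<tau>" "\<tau> \<le> p/2" "\<bar>x - T\<bar> \<le> pm*\<epsilon>/2" "0 \<le> T"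
    "\<tau> \<le> pm^2*\<epsilon>/(4*(T+1))" "0 < \<epsilon>"
  shows "\<bar>x/(2*q) - T/(2*p)\<bar> \<le> \<epsilon>"
proof -
  have p: "p > 0" using assms by simp
  have tau: "\<tau> \<ge> 0" using assms by simp
  have q: "q \<ge> p/2" using assms by linarith
  hence qp: "q > 0" using p by simp
  have eq: "x/(2*q) - T/(2*p) = (x - T)/(2*q) + T*(p - q)/(2*p*q)" using p qp by (simp add: field_simps)
  have b1: "\<bar>(x - T)/(2*q)\<bar> \<le> \<epsilon>/2"
  proof -
    have "\<bar>(x - T)/(2*q)\<bar> = \<bar>x - T\<bar>/(2*q)" using qp by (simp add: abs_div)
    also have "\<dots> \<le> (pm*\<epsilon>/2)/(2*q)" using assms qp by (intro divide_right_mono) auto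
    also have "\<dots> \<le> (pm*\<epsilon>/2)/(2*(p/2))" using assms q p by (intro divide_left_mono) auto
    also have "\<dots> = (pm/p) * (\<epsilon>/2)" using p by simp
    also have "\<dots> \<le> 1 * (\<epsilon>/2)" using assms p by (intro mult_right_mono) auto
    finally show ?thesis by simp
  qed
  have b2: "\<bar>T*(p - q)/(2*p*q)\<bar> \<le> \<epsilon>/2"
  proof -
    have "\<bar>T*(p - q)/(2*p*q)\<bar> = T*\<bar>p - q\<bar>/(2*p*q)" using qp p assms by (simp add: abs_div abs_mult)
    also have "\<dots> \<le> T*\<tau>/(2*p*q)" using qp p assms by (intro divide_right_mono mult_left_mono) auto
    also have "\<dots> \<le> T*\<tau>/(2*p*(p/2))" using assms q p tau by (intro divide_left_mono mult_pos_pos) auto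
    also have "\<dots> = T*\<tau>/(p*p)" by simp
    also have "\<dots> \<le> T*\<tau>/(pm*pm)" using assms tau by (intro divide_left_mono mult_mono) auto
    also have "\<dots> \<le> T*(pm^2*\<epsilon>/(4*(T+1)))/(pm*pm)" using assms by (intro divide_right_mono mult_left_mono) auto
    also have "\<dots> = (T/(T+1)) * (\<epsilon>/4)"
    proof -
      have T1: "T + 1 \<noteq> 0" "pm \<noteq> 0" using assms by auto
      have "T*(pm^2*\<epsilon>/(4*(T+1)))/(pm*pm) = T*\<epsilon>/(4*(T+1))" using T1 by (simp add: power2_eq_square)
      also have "\<dots> = (T/(T+1)) * (\<epsilon>/4)" using T1 by simp
      finally show ?thesis .
    qed
    also have "\<dots> \<le> 1 * (\<epsilon>/4)" using assms by (intro mult_right_mono) auto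
    finally show ?thesis using assms by simp
  qed
  show ?thesis unfolding eq using b1 b2 abs_triangle_ineq[of "(x - T)/(2*q)" "T*(p - q)/(2*p*q)"] by linarith
qed

context pop_margin
begin

lemma det_main:
  fixes Dh :: "real \<Rightarrow> real" and \<epsilon>' r \<Delta> \<kappa> k :: real
  assumes mono: "\<And>x y. 0 \<le> x \<Longrightarrow> x \<le> y \<Longrightarrow> Dh y \<le> Dh x"
  and bnd: "\<And>t. t \<in> {T - \<epsilon>', T + \<epsilon>', T - 2*r, T + 2*r, T - r/2, T + r/2, T + 2} \<Longrightarrow> 0 \<le> t \<Longrightarrow>
              Dh t \<le> Dp P \<eta> (t - \<kappa>) + k \<and> Dh t \<ge> Dm P \<eta> (t + \<kappa>) - k"
  and ep: "0 < \<epsilon>'" "\<epsilon>' \<le> r/2"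
  and kap: "0 \<le> \<kappa>" "\<kappa> \<le> \<epsilon>'/4"
  and rr: "r < 1/8" "4*r < e0" "T > 0 \<longrightarrow> 2*r \<le> T"
  and Dl: "0 < \<Delta>" "\<Delta> < 1/4" "2 * gm P \<eta> \<delta> (4*r) < \<Delta>" "2 * gp P \<eta> \<delta> (4*r) < \<Delta>"
     "Dm P \<eta> T < \<delta> \<longrightarrow> \<Delta> < (\<delta> - Dm P \<eta> T)/2"
     "T > 0 \<and> Dp P \<eta> T > \<delta> \<longrightarrow> \<Delta> < (Dp P \<eta> T - \<delta>)/2"
  and kk: "0 \<le> k" "k \<le> 1/4"
     "Dm P \<eta> T < \<delta> \<longrightarrow> k < (\<delta> - Dm P \<eta> T)/2"
     "T > 0 \<and> Dp P \<eta> T > \<delta> \<longrightarrow> k < (Dp P \<eta> T - \<delta>)/2"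
     "T > 0 \<and> Dm P \<eta> T = \<delta> \<and> Dp P \<eta> T = \<delta> \<longrightarrow>
        k < gm P \<eta> \<delta> (\<epsilon>'/2) \<and> k < gp P \<eta> \<delta> (\<epsilon>'/2) \<and> k \<le> gm P \<eta> \<delta> (4*r) \<and> k \<le> gp P \<eta> \<delta> (4*r)"
     "Dm P \<eta> T = \<delta> \<and> \<not> (T > 0 \<and> Dp P \<eta> T = \<delta>) \<longrightarrow> k \<le> gm P \<eta> \<delta> r \<and> k < gm P \<eta> \<delta> (r/4)"
     "T > 0 \<and> Dp P \<eta> T = \<delta> \<and> Dm P \<eta> T < \<delta> \<longrightarrow> k \<le> gp P \<eta> \<delta> r \<and> k < gp P \<eta> \<delta> (r/4)"
  shows "\<bar>sel (lv Dh \<delta>) (lv Dh (\<delta> + \<Delta>)) (lv Dh (\<delta> - \<Delta>)) r - T\<bar> \<le> \<epsilon>'"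
proof -
  interpret E: estim Dh T \<epsilon>' r \<delta> \<Delta> using mono T_nonneg ep Dl(1) by unfold_locales auto
  have r0: "r > 0" using ep by simp
  have T0: "T \<ge> 0" by (rule T_nonneg)
  note gmd = gm_def[of P \<eta> \<delta>] and gpd = gp_def[of P \<eta> \<delta>]
  have DmT: "Dm P \<eta> T \<le> \<delta>" by (rule Dm_T_le)
  have up: "Dh t \<le> Dp P \<eta> (t - \<kappa>) + k" and lo: "Dh t \<ge> Dm P \<eta> (t + \<kappa>) - k"
    if "t \<in> {T - \<epsilon>', T + \<epsilon>', T - 2*r, T + 2*r, T - r/2, T + r/2, T + 2}" "0 \<le> t" for t
    using bnd[OF that] by auto
  have hB: "Dh (T + 2) < \<delta> - \<Delta>"
  proof -
    have "Dh (T + 2) \<le> Dp P \<eta> (T + 2 - \<kappa>) + k" using T0 by (intro up) auto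
    also have "Dp P \<eta> (T + 2 - \<kappa>) = -1" using T0 kap ep rr by (intro Dp_big) auto
    finally show ?thesis using kk dpos Dl by simp
  qed
  have hR: "Dh (T + \<epsilon>') \<le> Dm P \<eta> (T + \<epsilon>'/2) + k"
  proof -
    have "Dh (T + \<epsilon>') \<le> Dp P \<eta> (T + \<epsilon>' - \<kappa>) + k" using T0 ep by (intro up) auto
    also have "Dp P \<eta> (T + \<epsilon>' - \<kappa>) \<le> Dm P \<eta> (T + \<epsilon>'/2)" using kap ep by (intro Dp_le_Dm) auto
    finally show ?thesis by simp
  qed
  have hRm: "Dh (T + r/2) \<le> Dm P \<eta> (T + r/4) + k"
  proof -
    have "Dh (T + r/2) \<le> Dp P \<eta> (T + r/2 - \<kappa>) + k" using T0 r0 by (intro up) auto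
    also have "Dp P \<eta> (T + r/2 - \<kappa>) \<le> Dm P \<eta> (T + r/4)" using kap ep by (intro Dp_le_Dm) auto
    finally show ?thesis by simp
  qed
  have hL: "Dh (T - \<epsilon>') \<ge> Dp P \<eta> (T - \<epsilon>'/2) - k" if "T > 0"
  proof -
    have "Dm P \<eta> (T - \<epsilon>' + \<kappa>) - k \<le> Dh (T - \<epsilon>')" using that rr ep by (intro lo) auto
    moreover have "Dp P \<eta> (T - \<epsilon>'/2) \<le> Dm P \<eta> (T - \<epsilon>' + \<kappa>)" using kap ep by (intro Dp_le_Dm) auto
    ultimately show ?thesis by simp
  qed
  have hLm: "Dh (T - r/2) \<ge> Dp P \<eta> (T - r/4) - k" if "T > 0"
  proof -
    have "Dm P \<eta> (T - r/2 + \<kappa>) - k \<le> Dh (T - r/2)" using that rr r0 by (intro lo) auto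
    moreover have "Dp P \<eta> (T - r/4) \<le> Dm P \<eta> (T - r/2 + \<kappa>)" using kap ep by (intro Dp_le_Dm) auto
    ultimately show ?thesis by simp
  qed
  have h2r: "Dh (T - 2*r) \<le> Dp P \<eta> T + gp P \<eta> \<delta> (4*r) + k" if "T > 0"
  proof -
    have "Dh (T - 2*r) \<le> Dp P \<eta> (T - 2*r - \<kappa>) + k" using that rr by (intro up) auto
    also have "Dp P \<eta> (T - 2*r - \<kappa>) = Dp P \<eta> T + gp P \<eta> \<delta> (2*r + \<kappa>)" unfolding gpd by (simp add: algebra_simps)
    also have "gp P \<eta> \<delta> (2*r + \<kappa>) \<le> gp P \<eta> \<delta> (4*r)" using kap ep by (intro gp_mono) auto
    finally show ?thesis by simp
  qed
  have h2rp: "Dh (T + 2*r) \<ge> Dm P \<eta> T - gm P \<eta> \<delta> (4*r) - k"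
  proof -
    have "Dm P \<eta> (T + 2*r + \<kappa>) - k \<le> Dh (T + 2*r)" using T0 r0 by (intro lo) auto
    moreover have "Dm P \<eta> (T + 2*r + \<kappa>) = Dm P \<eta> T - gm P \<eta> \<delta> (2*r + \<kappa>)" unfolding gmd by (simp add: algebra_simps)
    moreover have "gm P \<eta> \<delta> (2*r + \<kappa>) \<le> gm P \<eta> \<delta> (4*r)" using kap ep by (intro gm_mono) auto
    ultimately show ?thesis by simp
  qed
  have gmr: "gm P \<eta> \<delta> r \<le> gm P \<eta> \<delta> (4*r)" using r0 by (intro gm_mono) auto
  have gpr: "gp P \<eta> \<delta> r \<le> gp P \<eta> \<delta> (4*r)" using r0 by (intro gp_mono) auto
  have gm0: "0 \<le> gm P \<eta> \<delta> x" "0 \<le> gp P \<eta> \<delta> x" if "0 \<le> x" for x using that gm_nonneg gp_nonneg by auto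
  show ?thesis
  proof (cases "T > 0")
    case Tp: True
    have DpT: "Dp P \<eta> T \<ge> \<delta>" by (rule Dp_T_ge[OF Tp])
    show ?thesis
    proof (cases "Dm P \<eta> T = \<delta>")
      case m: True
      show ?thesis
      proof (cases "Dp P \<eta> T = \<delta>")
        case p: True
        have k1: "k < gm P \<eta> \<delta> (\<epsilon>'/2)" "k < gp P \<eta> \<delta> (\<epsilon>'/2)" "k \<le> gm P \<eta> \<delta> (4*r)" "k \<le> gp P \<eta> \<delta> (4*r)"
          using kk(5) Tp m p by auto
        show ?thesis
        proof (rule E.caseA)
          show "T - 2*r \<ge> 0" using rr Tp by simp
          have "Dm P \<eta> (T + \<epsilon>'/2) = \<delta> - gm P \<eta> \<delta> (\<epsilon>'/2)" using m unfolding gmd by simp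
          thus "Dh (T + \<epsilon>') < \<delta>" using hR k1 by simp
          have "Dp P \<eta> (T - \<epsilon>'/2) = \<delta> + gp P \<eta> \<delta> (\<epsilon>'/2)" using p unfolding gpd by simp
          thus "Dh (T - \<epsilon>') \<ge> \<delta>" using hL[OF Tp] k1 by simp
          show "Dh (T - 2*r) < \<delta> + \<Delta>" using h2r[OF Tp] p k1 Dl by simp
          show "Dh (T + 2*r) \<ge> \<delta> - \<Delta>" using h2rp m k1 Dl by simp
          show "0 \<le> T + 2" using T0 by simp
          show "Dh (T + 2) < \<delta> - \<Delta>" by (rule hB)
        qed
      next
        case p: False
        hence p': "Dp P \<eta> T > \<delta>" using DpT by simp
        have k1: "k \<le> gm P \<eta> \<delta> r" "k < gm P \<eta> \<delta> (r/4)" using kk(6) m p by auto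
        have k2: "k < (Dp P \<eta> T - \<delta>)/2" "\<Delta> < (Dp P \<eta> T - \<delta>)/2" using kk(4) Dl(6) Tp p' by auto
        show ?thesis
        proof (rule E.caseB2)
          show "T - \<epsilon>' \<le> 0 \<or> Dh (T - \<epsilon>') \<ge> \<delta> + \<Delta>"
          proof -
            have "Dp P \<eta> (T - \<epsilon>'/2) \<ge> Dp P \<eta> T" using ep by (intro Dp_mono) auto
            thus ?thesis using hL[OF Tp] k2 by simp
          qed
          have "Dm P \<eta> (T + \<epsilon>'/2) = \<delta> - gm P \<eta> \<delta> (\<epsilon>'/2)" using m unfolding gmd by simp
          thus "Dh (T + \<epsilon>') < \<delta> + \<Delta>" using hR k1 gmr Dl gm0[of "\<epsilon>'/2"] ep by simp
          have "Dm P \<eta> (T + r/4) = \<delta> - gm P \<eta> \<delta> (r/4)" using m unfolding gmd by simp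
          thus "Dh (T + r/2) < \<delta>" using hRm k1 by simp
        qed
      qed
    next
      case m: False
      hence m': "Dm P \<eta> T < \<delta>" using DmT by simp
      have k0: "k < (\<delta> - Dm P \<eta> T)/2" "\<Delta> < (\<delta> - Dm P \<eta> T)/2" using kk(3) Dl(5) m' by auto
      have hR2: "Dh (T + \<epsilon>') < \<delta> - \<Delta>"
      proof -
        have "Dm P \<eta> (T + \<epsilon>'/2) \<le> Dm P \<eta> T" using ep by (intro Dm_mono) auto
        thus ?thesis using hR k0 by simp
      qed
      show ?thesis
      proof (cases "Dp P \<eta> T = \<delta>")
        case p: True
        have k1: "k \<le> gp P \<eta> \<delta> r" "k < gp P \<eta> \<delta> (r/4)" using kk(7) Tp p m' by auto
        show ?thesis
        proof (rule E.caseB1)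
          show "T - 2*r \<ge> 0" using rr Tp by simp
          show "Dh (T + \<epsilon>') < \<delta> - \<Delta>" by (rule hR2)
          have "Dp P \<eta> (T - \<epsilon>'/2) = \<delta> + gp P \<eta> \<delta> (\<epsilon>'/2)" using p unfolding gpd by simp
          thus "Dh (T - \<epsilon>') \<ge> \<delta> - \<Delta>" using hL[OF Tp] k1 gpr Dl gm0[of "\<epsilon>'/2"] ep by simp
          show "Dh (T - 2*r) < \<delta> + \<Delta>" using h2r[OF Tp] p k1 gpr Dl by simp
          have "Dp P \<eta> (T - r/4) = \<delta> + gp P \<eta> \<delta> (r/4)" using p unfolding gpd by simp
          thus "Dh (T - r/2) \<ge> \<delta>" using hLm[OF Tp] k1 by simp
        qed
      next
        case p: False
        hence p': "Dp P \<eta> T > \<delta>" using DpT by simp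
        have k2: "k < (Dp P \<eta> T - \<delta>)/2" "\<Delta> < (Dp P \<eta> T - \<delta>)/2" using kk(4) Dl(6) Tp p' by auto
        show ?thesis
        proof (rule E.all_in)
          show "Dh (T + \<epsilon>') < \<delta> - \<Delta>" by (rule hR2)
          have "Dp P \<eta> (T - \<epsilon>'/2) \<ge> Dp P \<eta> T" using ep by (intro Dp_mono) auto
          thus "T - \<epsilon>' \<le> 0 \<or> Dh (T - \<epsilon>') \<ge> \<delta> + \<Delta>" using hL[OF Tp] k2 by simp
        qed
      qed
    qed
  next
    case Tz: False
    hence T00: "T = 0" using T0 by simp
    have tl: "T - \<epsilon>' \<le> 0" using T00 ep by simp
    show ?thesis
    proof (cases "Dm P \<eta> T = \<delta>")
      case m: True
      have k1: "k \<le> gm P \<eta> \<delta> r" "k < gm P \<eta> \<delta> (r/4)" using kk(6) m Tz by auto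
      show ?thesis
      proof (rule E.caseB2)
        show "T - \<epsilon>' \<le> 0 \<or> Dh (T - \<epsilon>') \<ge> \<delta> + \<Delta>" using tl by simp
        have "Dm P \<eta> (T + \<epsilon>'/2) = \<delta> - gm P \<eta> \<delta> (\<epsilon>'/2)" using m unfolding gmd by simp
        thus "Dh (T + \<epsilon>') < \<delta> + \<Delta>" using hR k1 gmr Dl gm0[of "\<epsilon>'/2"] ep by simp
        have "Dm P \<eta> (T + r/4) = \<delta> - gm P \<eta> \<delta> (r/4)" using m unfolding gmd by simp
        thus "Dh (T + r/2) < \<delta>" using hRm k1 by simp
      qed
    next
      case m: False
      hence m': "Dm P \<eta> T < \<delta>" using DmT by simp
      have k0: "k < (\<delta> - Dm P \<eta> T)/2" "\<Delta> < (\<delta> - Dm P \<eta> T)/2" using kk(3) Dl(5) m' by auto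
      show ?thesis
      proof (rule E.all_in)
        have "Dm P \<eta> (T + \<epsilon>'/2) \<le> Dm P \<eta> T" using ep by (intro Dm_mono) auto
        thus "Dh (T + \<epsilon>') < \<delta> - \<Delta>" using hR k0 by simp
        show "T - \<epsilon>' \<le> 0 \<or> Dh (T - \<epsilon>') \<ge> \<delta> + \<Delta>" using tl by simp
      qed
    qed
  qed
qed

end

lemma Dhat_mono:
  fixes x y :: real
  assumes "0 \<le> x" "x \<le> y"
  shows "Dhat eh n s y \<le> Dhat eh n s x"
proof -
  have m1: "real n * x / (2 * real m) \<le> real n * y / (2 * real m)" for m :: nat
    using assms by (intro divide_right_mono mult_left_mono) auto
  have A: "(\<Sum>i\<in>I. (if eh n True s (fst (s i)) > 1/2 + real n * y / (2 * real (ncount n s True)) then 1 else 0::real))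
        \<le> (\<Sum>i\<in>I. (if eh n True s (fst (s i)) > 1/2 + real n * x / (2 * real (ncount n s True)) then 1 else 0::real))" for I
    using m1[of "ncount n s True"] by (intro sum_mono) auto
  have B: "(\<Sum>i\<in>I. (if eh n False s (fst (s i)) > 1/2 - real n * x / (2 * real (ncount n s False)) then 1 else 0::real))
        \<le> (\<Sum>i\<in>I. (if eh n False s (fst (s i)) > 1/2 - real n * y / (2 * real (ncount n s False)) then 1 else 0::real))" for I
    using m1[of "ncount n s False"] by (intro sum_mono) auto
  show ?thesis unfolding Dhat_def
    by (intro diff_mono mult_left_mono A B) auto
qed

locale mainctx = pop_margin P \<eta> \<delta> \<gamma> e0 U
  for P :: "('x::euclidean_space \<times> bool \<times> bool) measure" and \<eta> \<delta> \<gamma> e0 U +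
  fixes eh :: "nat \<Rightarrow> bool \<Rightarrow> (nat \<Rightarrow> 'x \<times> bool \<times> bool) \<Rightarrow> 'x \<Rightarrow> real"
    and \<phi> :: "nat \<Rightarrow> bool \<Rightarrow> real" and c\<mu> c1\<eta> c2\<eta> L\<eta> U\<eta> :: real and \<Omega> :: "'x set"
  assumes cmu: "c\<mu> > 0" and phipos: "\<And>n a. 1 \<le> n \<Longrightarrow> \<phi> n a > 0"
    and philow: "\<And>n a. 1 \<le> n \<Longrightarrow> \<phi> n a \<ge> c\<mu> * real n powr (-1/2)"
    and cpos: "c1\<eta> > 0" "c2\<eta> > 0" "L\<eta> > 0" "U\<eta> > 0"
    and Om: "\<Omega> \<in> sets borel" "measure P {w\<in>space P. fst w \<in> \<Omega>} = 1"
    and ehb: "\<And>n a \<epsilon>. 1 \<le> n \<Longrightarrow> L\<eta> * \<phi> n a < \<epsilon> \<Longrightarrow> \<epsilon> < U\<eta> \<Longrightarrow>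
        outer_prob_le (PiM {..<n} (\<lambda>_. P)) {s. \<exists>x\<in>\<Omega>. \<bar>eh n a s x - \<eta> a x\<bar> > \<epsilon>} (c1\<eta> * exp (- c2\<eta> * (\<epsilon> / \<phi> n a)\<^sup>2))"
begin

definition "dm = \<delta> - Dm P \<eta> T"
definition "dp = Dp P \<eta> T - \<delta>"
definition "CC = 8 / pmin"
definition "cc = min (min (pmin/2) (1/(4*CC))) (min (pmin^2/(32*(T+2)))
    (min (if dm > 0 then dm/(4*CC) else 1) (min (if T > 0 \<and> dp > 0 then dp/(4*CC) else 1) ((pmin/4) powr \<gamma> / (2*CC*U^2)))))"
definition "K1 = 60 + 2*c1\<eta>"
definition "K2 = min (2*cc^2*c\<mu>^2) (c2\<eta>*(pmin/32)^2)"
definition "K3 = (60::real)"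
definition "K4 = 2*cc^2"
definition "LTc = 32*L\<eta>/pmin"
definition "UTc = min (min (1/8) (e0/4)) (min U\<eta> (if T > 0 then T/4 else 1))"
definition "UDc = min (1/4) (min (if dm > 0 then dm/2 else 1) (if T > 0 \<and> dp > 0 then dp/2 else 1))"

lemma pm1: "pmin \<le> 1" using pA_le1[of True] by simp
lemma CCpos: "CC > 0" unfolding CC_def using pmin_pos by simp
lemma dm_nonneg: "dm \<ge> 0" unfolding dm_def using Dm_T_le by simp

lemma min6_pos: "0<a \<Longrightarrow> 0<b \<Longrightarrow> 0<c \<Longrightarrow> 0<d \<Longrightarrow> 0<e \<Longrightarrow> 0<f \<Longrightarrow> 0 < min (min a b) (min c (min d (min e f)))" for a b c d e f :: real
  by simp
lemma t1: "pmin/2 > 0" using pmin_pos by simp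
lemma t2: "1/(4*CC) > 0" using CCpos by simp
lemma t3: "pmin^2/(32*(T+2)) > 0"
  by (intro divide_pos_pos zero_less_power pmin_pos) (use T_nonneg in simp)
lemma t4: "(if dm > 0 then dm/(4*CC) else 1) > 0" using CCpos by simp
lemma t5: "(if T > 0 \<and> dp > 0 then dp/(4*CC) else 1) > 0" using CCpos by simp
lemma t6: "(pmin/4) powr \<gamma> / (2*CC*U^2) > 0"
proof -
  have gen: "0 < x \<Longrightarrow> 0 < c \<Longrightarrow> 0 < u \<Longrightarrow> 0 < (x/4) powr g / (2*c*u^2)" for x c u g :: real by simp
  show ?thesis by (rule gen[OF pmin_pos CCpos Upos])
qed
lemma cc_pos: "cc > 0" unfolding cc_def by (rule min6_pos[OF t1 t2 t3 t4 t5 t6])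

lemma cc_le1: "cc \<le> pmin/2" unfolding cc_def by (intro min.coboundedI1 min.cobounded1)
lemma cc_le2: "cc \<le> 1/(4*CC)" unfolding cc_def by (intro min.coboundedI1 min.cobounded2)
lemma cc_le3: "cc \<le> pmin^2/(32*(T+2))" unfolding cc_def by (intro min.coboundedI2 min.cobounded1)
lemma cc_le4: "dm > 0 \<Longrightarrow> cc \<le> dm/(4*CC)"
proof -
  assume "dm > 0"
  have "cc \<le> (if dm > 0 then dm/(4*CC) else 1)" unfolding cc_def
    by (intro min.coboundedI2 min.cobounded1)
  thus ?thesis using \<open>dm > 0\<close> by simp
qed
lemma cc_le5: "T > 0 \<Longrightarrow> dp > 0 \<Longrightarrow> cc \<le> dp/(4*CC)"
proof -
  assume "T > 0" "dp > 0"
  have "cc \<le> (if T > 0 \<and> dp > 0 then dp/(4*CC) else 1)" unfolding cc_def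
    by (intro min.coboundedI2 min.cobounded1)
  thus ?thesis using \<open>T > 0\<close> \<open>dp > 0\<close> by simp
qed
lemma cc_le6: "cc \<le> (pmin/4) powr \<gamma> / (2*CC*U^2)" unfolding cc_def
  by (intro min.coboundedI2 min.cobounded2)
lemmas cc_le = cc_le1 cc_le2 cc_le3 cc_le4 cc_le5 cc_le6

lemma K1pos: "K1 > 0" unfolding K1_def using cpos by simp
lemma K2pos: "K2 > 0"
proof -
  have gen: "0 < x \<Longrightarrow> 0 < c \<Longrightarrow> 0 < c * (x/32)^2" for x c :: real by simp
  have "0 < c2\<eta> * (pmin/32)^2" by (rule gen[OF pmin_pos cpos(2)])
  thus ?thesis unfolding K2_def using cc_pos cmu by simp
qed
lemma K3pos: "K3 > 0" unfolding K3_def by simp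
lemma K4pos: "K4 > 0" unfolding K4_def using cc_pos by simp
lemma LTpos: "LTc > 0" unfolding LTc_def using cpos pmin_pos by simp
lemma UTpos: "UTc > 0" unfolding UTc_def using cpos e0pos by simp
lemma UDpos: "UDc > 0" unfolding UDc_def by simp
lemmas consts_pos = K1pos K2pos K3pos K4pos LTpos UTpos UDpos

lemma kbound_m:
  assumes z: "0 < z" "z < e0" and w: "0 < w" "w < e0" "(pmin/4)*z \<le> w" and eq: "Dm P \<eta> T = \<delta>"
    and tau: "0 \<le> \<tau>" "\<tau> \<le> cc * gm P \<eta> \<delta> z"
  shows "CC*\<tau> < gm P \<eta> \<delta> w"
proof -
  have "CC*\<tau> \<le> CC*(cc * gm P \<eta> \<delta> z)" using tau CCpos by simp
  also have "\<dots> \<le> CC*(cc*(U * z powr \<gamma>))" using gm_up[OF z] CCpos cc_pos by simp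
  also have "\<dots> = (CC*cc)*U * z powr \<gamma>" by simp
  also have "\<dots> \<le> ((pmin/4) powr \<gamma> / (2*U^2)) * U * z powr \<gamma>"
  proof -
    have "CC*cc \<le> CC*((pmin/4) powr \<gamma> / (2*CC*U^2))" using cc_le(6) CCpos by (intro mult_left_mono) auto
    also have "\<dots> = (pmin/4) powr \<gamma> / (2*U^2)" using CCpos by simp
    finally show ?thesis using Upos by (intro mult_right_mono) auto
  qed
  also have "\<dots> = ((pmin/4) powr \<gamma> * z powr \<gamma>) / (2*U)" using Upos by (simp add: power2_eq_square)
  also have "(pmin/4) powr \<gamma> * z powr \<gamma> = ((pmin/4)*z) powr \<gamma>" by (rule powr_mult[symmetric])
  also have "((pmin/4)*z) powr \<gamma> \<le> w powr \<gamma>" using w pmin_pos z gpos by (intro powr_mono2) auto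
  hence "((pmin/4)*z) powr \<gamma> / (2*U) \<le> w powr \<gamma> / (2*U)" using Upos by (intro divide_right_mono) auto
  also have "w powr \<gamma> / (2*U) < w powr \<gamma> / U" using Upos w by (simp add: field_simps)
  also have "w powr \<gamma> / U \<le> gm P \<eta> \<delta> w" by (rule gm_low[OF w(1,2) eq])
  finally show ?thesis .
qed

lemma kbound_p:
  assumes z: "0 < z" "z < e0" and w: "0 < w" "w < e0" "(pmin/4)*z \<le> w" and eq: "Dp P \<eta> T = \<delta>"
    and tau: "0 \<le> \<tau>" "\<tau> \<le> cc * gp P \<eta> \<delta> z"
  shows "CC*\<tau> < gp P \<eta> \<delta> w"
proof -
  have "CC*\<tau> \<le> CC*(cc * gp P \<eta> \<delta> z)" using tau CCpos by simp
  also have "\<dots> \<le> CC*(cc*(U * z powr \<gamma>))" using gp_up[OF z] CCpos cc_pos by simp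
  also have "\<dots> = (CC*cc)*U * z powr \<gamma>" by simp
  also have "\<dots> \<le> ((pmin/4) powr \<gamma> / (2*U^2)) * U * z powr \<gamma>"
  proof -
    have "CC*cc \<le> CC*((pmin/4) powr \<gamma> / (2*CC*U^2))" using cc_le(6) CCpos by (intro mult_left_mono) auto
    also have "\<dots> = (pmin/4) powr \<gamma> / (2*U^2)" using CCpos by simp
    finally show ?thesis using Upos by (intro mult_right_mono) auto
  qed
  also have "\<dots> = ((pmin/4) powr \<gamma> * z powr \<gamma>) / (2*U)" using Upos by (simp add: power2_eq_square)
  also have "(pmin/4) powr \<gamma> * z powr \<gamma> = ((pmin/4)*z) powr \<gamma>" by (rule powr_mult[symmetric])
  also have "((pmin/4)*z) powr \<gamma> \<le> w powr \<gamma>" using w pmin_pos z gpos by (intro powr_mono2) auto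
  hence "((pmin/4)*z) powr \<gamma> / (2*U) \<le> w powr \<gamma> / (2*U)" using Upos by (intro divide_right_mono) auto
  also have "w powr \<gamma> / (2*U) < w powr \<gamma> / U" using Upos w by (simp add: field_simps)
  also have "w powr \<gamma> / U \<le> gp P \<eta> \<delta> w" by (rule gp_low[OF w(1,2) eq])
  finally show ?thesis .
qed

end

context mainctx
begin

lemma UT_facts: "r < UTc \<Longrightarrow> r < 1/8 \<and> r < e0/4 \<and> r < U\<eta> \<and> (T > 0 \<longrightarrow> r < T/4)"
  unfolding UTc_def by (auto split: if_splits)

lemma UD_facts: "\<Delta> < UDc \<Longrightarrow> \<Delta> < 1/4 \<and> (dm > 0 \<longrightarrow> \<Delta> < dm/2) \<and> (T > 0 \<and> dp > 0 \<longrightarrow> \<Delta> < dp/2)"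
  unfolding UDc_def by (auto split: if_splits)

lemma pm_le: "pmin \<le> pA P a" by (cases a) auto

lemma main_det:
  fixes a :: bool and n :: nat and r \<Delta> \<epsilon> \<tau> e \<kappa> :: real and s
  assumes n: "1 \<le> n"
   and r2: "r < UTc"
   and D1: "2 * max (gm P \<eta> \<delta> (4*r)) (gp P \<eta> \<delta> (4*r)) < \<Delta>" and D2: "\<Delta> < UDc"
   and e0': "0 < \<epsilon>" and e2: "\<epsilon> < r"
   and edef: "e = pmin * \<epsilon> / 32"
   and tau0: "0 \<le> \<tau>" and tauE: "\<tau> \<le> cc * \<epsilon>"
   and tauG: "\<tau> \<le> cc * min (if \<delta> = Dm P \<eta> T then gm P \<eta> \<delta> (omega P \<eta> \<delta> \<epsilon> r) else 1)
                            (if \<delta> = Dp P \<eta> T then gp P \<eta> \<delta> (omega P \<eta> \<delta> \<epsilon> r) else 1)"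
   and kdef: "\<kappa> = 2*e + 2*(T+2)*\<tau>/pmin"
   and q: "\<And>a. \<bar>real (ncount n s a) / n - pA P a\<bar> \<le> \<tau>"
   and close: "\<And>a i. i < n \<Longrightarrow> fst (snd (s i)) = a \<Longrightarrow> \<bar>eh n a s (fst (s i)) - \<eta> a (fst (s i))\<bar> \<le> e"
   and emp: "\<And>t a. t \<in> {T - pmin*\<epsilon>/2, T + pmin*\<epsilon>/2, T - 2*r, T + 2*r, T - r/2, T + r/2, T + 2} \<Longrightarrow>
        \<bar>real (cnt n s a {x. \<eta> a x > lev P a (t - \<kappa>)}) / n - mu P a {x. \<eta> a x > lev P a (t - \<kappa>)}\<bar> \<le> \<tau>
      \<and> \<bar>real (cnt n s a {x. \<eta> a x > lev P a (t + \<kappa>)}) / n - mu P a {x. \<eta> a x > lev P a (t + \<kappa>)}\<bar> \<le> \<tau>"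
  shows "\<bar>That eh n s \<delta> \<Delta> r a - Tstar P \<eta> \<delta> a\<bar> \<le> \<epsilon>"
proof -
  define \<epsilon>' where "\<epsilon>' = pmin * \<epsilon> / 2"
  define k where "k = CC * \<tau>"
  have pm: "0 < pmin" "pmin \<le> 1" using pmin_pos pm1 by auto
  have uf: "r < 1/8" "r < e0/4" "r < U\<eta>" "T > 0 \<longrightarrow> r < T/4" using UT_facts[OF r2] by auto
  have df: "\<Delta> < 1/4" "dm > 0 \<longrightarrow> \<Delta> < dm/2" "T > 0 \<and> dp > 0 \<longrightarrow> \<Delta> < dp/2" using UD_facts[OF D2] by auto
  have r0: "r > 0" using e0' e2 by simp
  have e1: "\<epsilon> < 1" using e2 uf by simp
  have T0: "T \<ge> 0" by (rule T_nonneg)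
  have ep0: "0 < \<epsilon>'" using pm e0' by (simp add: \<epsilon>'_def)
  have ep1: "\<epsilon>' \<le> r/2"
  proof -
    have "pmin * \<epsilon> \<le> 1 * \<epsilon>" using pm e0' by (intro mult_right_mono) auto
    thus ?thesis using e2 by (simp add: \<epsilon>'_def)
  qed
  have e_nn: "0 \<le> e" using pm e0' by (simp add: edef)
  have CCv: "CC = 8/pmin" by (simp add: CC_def)
  have kap0: "0 \<le> \<kappa>" using e_nn tau0 T0 pm by (simp add: kdef)
  have kap1: "\<kappa> \<le> \<epsilon>'/4"
  proof -
    have "\<tau> \<le> pmin^2/(32*(T+2)) * \<epsilon>" using tauE cc_le3 e0' by (meson mult_right_mono less_imp_le order.trans)
    hence "2*(T+2)*\<tau> \<le> 2*(T+2)*(pmin^2/(32*(T+2)) * \<epsilon>)" using T0 by (intro mult_left_mono) auto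
    also have "\<dots> = pmin^2*\<epsilon>/16" using T0 by (simp add: field_simps)
    finally have "2*(T+2)*\<tau>/pmin \<le> (pmin^2*\<epsilon>/16)/pmin" using pm by (intro divide_right_mono) auto
    also have "(pmin^2*\<epsilon>/16)/pmin = pmin*\<epsilon>/16" using pm by (simp add: power2_eq_square)
    finally have h: "2*(T+2)*\<tau>/pmin \<le> pmin*\<epsilon>/16" .
    have k1: "\<kappa> = pmin*\<epsilon>/16 + 2*(T+2)*\<tau>/pmin" by (simp add: kdef edef)
    have k2: "\<epsilon>'/4 = pmin*\<epsilon>/16 + pmin*\<epsilon>/16" by (simp add: \<epsilon>'_def)
    show ?thesis unfolding k1 k2 using h by (rule add_left_mono)
  qed
  have tau_le: "\<tau> \<le> pmin/2"
  proof -
    have "cc * \<epsilon> \<le> cc * 1" using e1 cc_pos by (intro mult_left_mono) auto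
    thus ?thesis using tauE cc_le1 by simp
  qed
  have k0: "0 \<le> k" using tau0 CCpos by (simp add: k_def)
  have kE: "k \<le> \<epsilon>/4"
  proof -
    have "k \<le> CC * (cc * \<epsilon>)" using tauE CCpos by (simp add: k_def)
    also have "\<dots> = (CC*cc) * \<epsilon>" by simp
    also have "\<dots> \<le> (1/4) * \<epsilon>"
    proof -
      have "CC*cc \<le> CC*(1/(4*CC))" using cc_le2 CCpos by (intro mult_left_mono) auto
      hence "CC*cc \<le> 1/4" using CCpos by simp
      thus ?thesis using e0' by (intro mult_right_mono) auto
    qed
    finally show ?thesis by simp
  qed
  have kG: "k \<le> (CC*cc) * min (if \<delta> = Dm P \<eta> T then gm P \<eta> \<delta> (omega P \<eta> \<delta> \<epsilon> r) else 1)
                            (if \<delta> = Dp P \<eta> T then gp P \<eta> \<delta> (omega P \<eta> \<delta> \<epsilon> r) else 1)"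
    using tauG CCpos by (simp add: k_def mult.assoc)
  have CCcc: "CC*cc \<le> 1/4"
  proof -
    have "CC*cc \<le> CC*(1/(4*CC))" using cc_le2 CCpos by (intro mult_left_mono) auto
    thus ?thesis using CCpos by simp
  qed
  have DmT: "Dm P \<eta> T \<le> \<delta>" by (rule Dm_T_le)
  have \<Delta>0: "0 < \<Delta>"
  proof -
    have "0 \<le> gm P \<eta> \<delta> (4*r)" using r0 by (intro gm_nonneg) auto
    thus ?thesis using D1 by linarith
  qed
  have mono: "\<And>x y. 0 \<le> x \<Longrightarrow> x \<le> y \<Longrightarrow> Dhat eh n s y \<le> Dhat eh n s x"
    by (rule Dhat_mono)
  have bnd: "Dhat eh n s t \<le> Dp P \<eta> (t - \<kappa>) + k \<and> Dhat eh n s t \<ge> Dm P \<eta> (t + \<kappa>) - k"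
    if t: "t \<in> {T - \<epsilon>', T + \<epsilon>', T - 2*r, T + 2*r, T - r/2, T + r/2, T + 2}" "0 \<le> t" for t
  proof -
    have tB: "t \<le> T + 2" using t ep1 ep0 uf r0 by auto
    have kk: "\<kappa> \<ge> 2*e + 2*(T+2)*\<tau>/pmin" by (simp add: kdef)
    have em: "\<And>a. \<bar>real (cnt n s a {x. \<eta> a x > lev P a (t - \<kappa>)}) / n - mu P a {x. \<eta> a x > lev P a (t - \<kappa>)}\<bar> \<le> \<tau>"
      "\<And>a. \<bar>real (cnt n s a {x. \<eta> a x > lev P a (t + \<kappa>)}) / n - mu P a {x. \<eta> a x > lev P a (t + \<kappa>)}\<bar> \<le> \<tau>"
      using emp[of t] t(1) by (auto simp: \<epsilon>'_def)
    note B = Dhat_bounds[where n=n and t=t and B="T+2" and \<tau>=\<tau> and s=s and e=e and \<kappa>=\<kappa> and eh=eh, OF n t(2) tB tau_le q e_nn close kk em(1) em(2)]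
    show ?thesis using B by (simp add: k_def CCv)
  qed
  have sel: "\<bar>sel (lv (Dhat eh n s) \<delta>) (lv (Dhat eh n s) (\<delta> + \<Delta>)) (lv (Dhat eh n s) (\<delta> - \<Delta>)) r - T\<bar> \<le> \<epsilon>'"
  proof (rule det_main[OF mono bnd ep0 ep1 kap0 kap1])
    show "r < 1/8" "4*r < e0" using uf by auto
    show "T > 0 \<longrightarrow> 2*r \<le> T" using uf by auto
    show "0 < \<Delta>" "\<Delta> < 1/4" by (fact \<Delta>0) (fact df(1))
    show "2 * gm P \<eta> \<delta> (4*r) < \<Delta>" "2 * gp P \<eta> \<delta> (4*r) < \<Delta>" using D1 by auto
    show "Dm P \<eta> T < \<delta> \<longrightarrow> \<Delta> < (\<delta> - Dm P \<eta> T)/2" using df(2) by (simp add: dm_def)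
    show "T > 0 \<and> Dp P \<eta> T > \<delta> \<longrightarrow> \<Delta> < (Dp P \<eta> T - \<delta>)/2" using df(3) by (simp add: dp_def)
    show "0 \<le> k" "k \<le> 1/4" using k0 kE e1 by auto
    show "Dm P \<eta> T < \<delta> \<longrightarrow> k < (\<delta> - Dm P \<eta> T)/2"
    proof
      assume h: "Dm P \<eta> T < \<delta>"
      hence dmp: "dm > 0" by (simp add: dm_def)
      have "k \<le> CC * (cc * \<epsilon>)" using tauE CCpos by (simp add: k_def)
      also have "\<dots> \<le> CC * (dm/(4*CC) * \<epsilon>)" using cc_le4[OF dmp] CCpos e0' by (intro mult_left_mono mult_right_mono) auto
      also have "\<dots> = dm * \<epsilon> / 4" using CCpos by simp
      also have "\<dots> < dm / 2" using dmp e1 by simp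
      finally show "k < (\<delta> - Dm P \<eta> T)/2" by (simp add: dm_def)
    qed
    show "T > 0 \<and> Dp P \<eta> T > \<delta> \<longrightarrow> k < (Dp P \<eta> T - \<delta>)/2"
    proof
      assume h: "T > 0 \<and> Dp P \<eta> T > \<delta>"
      hence dpp: "dp > 0" and Tp: "T > 0" by (auto simp: dp_def)
      have "k \<le> CC * (cc * \<epsilon>)" using tauE CCpos by (simp add: k_def)
      also have "\<dots> \<le> CC * (dp/(4*CC) * \<epsilon>)" using cc_le5[OF Tp dpp] CCpos e0' by (intro mult_left_mono mult_right_mono) auto
      also have "\<dots> = dp * \<epsilon> / 4" using CCpos by simp
      also have "\<dots> < dp / 2" using dpp e1 by simp
      finally show "k < (Dp P \<eta> T - \<delta>)/2" by (simp add: dp_def)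
    qed
    show "T > 0 \<and> Dm P \<eta> T = \<delta> \<and> Dp P \<eta> T = \<delta> \<longrightarrow>
        k < gm P \<eta> \<delta> (\<epsilon>'/2) \<and> k < gp P \<eta> \<delta> (\<epsilon>'/2) \<and> k \<le> gm P \<eta> \<delta> (4*r) \<and> k \<le> gp P \<eta> \<delta> (4*r)"
    proof
      assume h: "T > 0 \<and> Dm P \<eta> T = \<delta> \<and> Dp P \<eta> T = \<delta>"
      have om: "omega P \<eta> \<delta> \<epsilon> r = \<epsilon>" using h by (simp add: omega_def)
      have tm: "\<tau> \<le> cc * gm P \<eta> \<delta> \<epsilon>" "\<tau> \<le> cc * gp P \<eta> \<delta> \<epsilon>"
      proof -
        have "min (gm P \<eta> \<delta> \<epsilon>) (gp P \<eta> \<delta> \<epsilon>) \<le> gm P \<eta> \<delta> \<epsilon>" "min (gm P \<eta> \<delta> \<epsilon>) (gp P \<eta> \<delta> \<epsilon>) \<le> gp P \<eta> \<delta> \<epsilon>" by auto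
        thus "\<tau> \<le> cc * gm P \<eta> \<delta> \<epsilon>" "\<tau> \<le> cc * gp P \<eta> \<delta> \<epsilon>" using tauG h om cc_pos
          by (smt (verit) mult_left_mono)+
      qed
      have ez: "0 < \<epsilon>" "\<epsilon> < e0" using e0' e2 uf by auto
      have wz: "0 < \<epsilon>'/2" "\<epsilon>'/2 < e0" "(pmin/4)*\<epsilon> \<le> \<epsilon>'/2" using ep0 ep1 uf e2 by (auto simp: \<epsilon>'_def)
      have a1: "k < gm P \<eta> \<delta> (\<epsilon>'/2)" unfolding k_def using kbound_m[OF ez wz _ tau0 tm(1)] h by simp
      have a2: "k < gp P \<eta> \<delta> (\<epsilon>'/2)" unfolding k_def using kbound_p[OF ez wz _ tau0 tm(2)] h by simp
      have g1: "gm P \<eta> \<delta> \<epsilon> \<le> gm P \<eta> \<delta> (4*r)" "gp P \<eta> \<delta> \<epsilon> \<le> gp P \<eta> \<delta> (4*r)" using e2 e0' by (auto intro!: gm_mono gp_mono)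
      have g0: "0 \<le> gm P \<eta> \<delta> \<epsilon>" "0 \<le> gp P \<eta> \<delta> \<epsilon>" using e0' by (auto intro!: gm_nonneg gp_nonneg)
      have "k \<le> CC * (cc * gm P \<eta> \<delta> \<epsilon>)" using tm CCpos by (simp add: k_def)
      also have "\<dots> = (CC*cc) * gm P \<eta> \<delta> \<epsilon>" by simp
      also have "\<dots> \<le> 1 * gm P \<eta> \<delta> \<epsilon>" using CCcc g0 by (intro mult_right_mono) auto
      finally have a3: "k \<le> gm P \<eta> \<delta> (4*r)" using g1 by simp
      have "k \<le> CC * (cc * gp P \<eta> \<delta> \<epsilon>)" using tm CCpos by (simp add: k_def)
      also have "\<dots> = (CC*cc) * gp P \<eta> \<delta> \<epsilon>" by simp
      also have "\<dots> \<le> 1 * gp P \<eta> \<delta> \<epsilon>" using CCcc g0 by (intro mult_right_mono) auto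
      finally have a4: "k \<le> gp P \<eta> \<delta> (4*r)" using g1 by simp
      show "k < gm P \<eta> \<delta> (\<epsilon>'/2) \<and> k < gp P \<eta> \<delta> (\<epsilon>'/2) \<and> k \<le> gm P \<eta> \<delta> (4*r) \<and> k \<le> gp P \<eta> \<delta> (4*r)"
        using a1 a2 a3 a4 by simp
    qed
    show "Dm P \<eta> T = \<delta> \<and> \<not> (T > 0 \<and> Dp P \<eta> T = \<delta>) \<longrightarrow> k \<le> gm P \<eta> \<delta> r \<and> k < gm P \<eta> \<delta> (r/4)"
    proof
      assume h: "Dm P \<eta> T = \<delta> \<and> \<not> (T > 0 \<and> Dp P \<eta> T = \<delta>)"
      have om: "omega P \<eta> \<delta> \<epsilon> r = r" using h by (auto simp: omega_def)
      have tm: "\<tau> \<le> cc * gm P \<eta> \<delta> r"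
      proof -
        have "min (gm P \<eta> \<delta> r) (if \<delta> = Dp P \<eta> T then gp P \<eta> \<delta> r else 1) \<le> gm P \<eta> \<delta> r" by auto
        thus ?thesis using tauG h om cc_pos by (smt (verit) mult_left_mono)
      qed
      have ez: "0 < r" "r < e0" using r0 uf by auto
      have wz: "0 < r/4" "r/4 < e0" "(pmin/4)*r \<le> r/4" using r0 uf pm by auto
      have a1: "k < gm P \<eta> \<delta> (r/4)" unfolding k_def using kbound_m[OF ez wz _ tau0 tm] h by simp
      have g0: "0 \<le> gm P \<eta> \<delta> r" using r0 by (auto intro!: gm_nonneg)
      have "k \<le> CC * (cc * gm P \<eta> \<delta> r)" using tm CCpos by (simp add: k_def)
      also have "\<dots> = (CC*cc) * gm P \<eta> \<delta> r" by simp
      also have "\<dots> \<le> 1 * gm P \<eta> \<delta> r" using CCcc g0 by (intro mult_right_mono) auto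
      finally show "k \<le> gm P \<eta> \<delta> r \<and> k < gm P \<eta> \<delta> (r/4)" using a1 by simp
    qed
    show "T > 0 \<and> Dp P \<eta> T = \<delta> \<and> Dm P \<eta> T < \<delta> \<longrightarrow> k \<le> gp P \<eta> \<delta> r \<and> k < gp P \<eta> \<delta> (r/4)"
    proof
      assume h: "T > 0 \<and> Dp P \<eta> T = \<delta> \<and> Dm P \<eta> T < \<delta>"
      have om: "omega P \<eta> \<delta> \<epsilon> r = r" using h by (auto simp: omega_def)
      have tm: "\<tau> \<le> cc * gp P \<eta> \<delta> r"
      proof -
        have "min (if \<delta> = Dm P \<eta> T then gm P \<eta> \<delta> r else 1) (gp P \<eta> \<delta> r) \<le> gp P \<eta> \<delta> r" by auto
        thus ?thesis using tauG h om cc_pos by (smt (verit) mult_left_mono)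
      qed
      have ez: "0 < r" "r < e0" using r0 uf by auto
      have wz: "0 < r/4" "r/4 < e0" "(pmin/4)*r \<le> r/4" using r0 uf pm by auto
      have a1: "k < gp P \<eta> \<delta> (r/4)" unfolding k_def using kbound_p[OF ez wz _ tau0 tm] h by simp
      have g0: "0 \<le> gp P \<eta> \<delta> r" using r0 by (auto intro!: gp_nonneg)
      have "k \<le> CC * (cc * gp P \<eta> \<delta> r)" using tm CCpos by (simp add: k_def)
      also have "\<dots> = (CC*cc) * gp P \<eta> \<delta> r" by simp
      also have "\<dots> \<le> 1 * gp P \<eta> \<delta> r" using CCcc g0 by (intro mult_right_mono) auto
      finally show "k \<le> gp P \<eta> \<delta> r \<and> k < gp P \<eta> \<delta> (r/4)" using a1 by simp
    qed
  qed
  define x where "x = that eh n s \<delta> \<Delta> r"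
  have xT: "\<bar>x - T\<bar> \<le> pmin*\<epsilon>/2" using sel by (simp add: x_def that_sel \<epsilon>'_def)
  have taufin: "\<tau> \<le> pmin^2*\<epsilon>/(4*(T+1))"
  proof -
    have "\<tau> \<le> pmin^2/(32*(T+2)) * \<epsilon>" using tauE cc_le3 e0' by (meson mult_right_mono less_imp_le order.trans)
    also have "pmin^2/(32*(T+2)) * \<epsilon> \<le> pmin^2/(4*(T+1)) * \<epsilon>"
      using T0 e0' pm by (intro mult_right_mono divide_left_mono) auto
    finally show ?thesis by simp
  qed
  have fa: "\<bar>x/(2*(real (ncount n s a)/n)) - T/(2*pA P a)\<bar> \<le> \<epsilon>"
  proof (rule final_arith[OF pmin_pos pm_le q[of a] _ xT T0 taufin e0'])
    show "\<tau> \<le> pA P a / 2" using tau_le pm_le[of a] by linarith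
  qed
  have np: "real n > 0" using n by simp
  have eq1: "real n * x / (2 * real (ncount n s a)) = x/(2*(real (ncount n s a)/n))" using np by (simp add: field_simps)
  have "That eh n s \<delta> \<Delta> r a - Tstar P \<eta> \<delta> a = sgnA a * (x/(2*(real (ncount n s a)/n)) - T/(2*pA P a))"
    unfolding That_def Tstar_def x_def[symmetric] using eq1 by (simp add: algebra_simps)
  moreover have "\<bar>sgnA a\<bar> = 1" by (simp add: sgnA_def)
  ultimately show ?thesis using fa by (simp add: abs_mult)
qed

end

lemma nm_gen:
  fixes n :: nat and c m :: real
  assumes n: "1 \<le> n" and c: "0 \<le> c" and h: "c * real n powr (-1/2) \<le> m"
  shows "c^2 \<le> real n * m^2"
proof -
  have np: "real n > 0" using n by simp
  have p2: "(real n powr (-1/2))^2 = 1 / real n"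
  proof -
    have "(real n powr (-1/2))^2 = real n powr (-1/2) * real n powr (-1/2)" by (simp add: power2_eq_square)
    also have "\<dots> = real n powr (-1/2 + -1/2)" by (rule powr_add[symmetric])
    also have "\<dots> = real n powr (-1)" by simp
    also have "\<dots> = 1 / real n" using np by (simp add: powr_minus_divide)
    finally show ?thesis .
  qed
  have "0 \<le> c * real n powr (-1/2)" using c by simp
  hence "(c * real n powr (-1/2))^2 \<le> m^2" using h by (intro power_mono) auto
  also have "(c * real n powr (-1/2))^2 = c^2 * (1 / real n)" by (simp only: power_mult_distrib p2)
  finally have "c^2 * (1 / real n) \<le> m^2" .
  hence "c^2 * (1 / real n) * real n \<le> m^2 * real n" using np by (intro mult_right_mono) auto
  also have "c^2 * (1 / real n) * real n = c^2" using np by simp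
  finally show ?thesis by (simp add: mult.commute)
qed

context mainctx
begin

lemma min_def_disj: "min x y = x \<or> min x y = (y::real)" by (simp add: min_def)

lemma main_bound:
  fixes a :: bool and n :: nat and r \<Delta> \<epsilon> :: real
  assumes n: "1 \<le> n" and r1: "LTc * max (\<phi> n True) (\<phi> n False) < r" and r2: "r < UTc"
   and D1: "2 * max (gm P \<eta> \<delta> (4*r)) (gp P \<eta> \<delta> (4*r)) < \<Delta>" and D2: "\<Delta> < UDc"
   and e1: "LTc * max (\<phi> n True) (\<phi> n False) < \<epsilon>" and e2: "\<epsilon> < r"
  shows "outer_prob_le (PiM {..<n} (\<lambda>_. P)) {s. \<bar>That eh n s \<delta> \<Delta> r a - Tstar P \<eta> \<delta> a\<bar> > \<epsilon>}
     (K1 * exp (- K2 * (\<epsilon> / max (\<phi> n True) (\<phi> n False))\<^sup>2)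
      + (if \<delta> = Dm P \<eta> T then K3 * exp (- K4 * real n * (gm P \<eta> \<delta> (omega P \<eta> \<delta> \<epsilon> r))\<^sup>2) else 0)
      + (if \<delta> = Dp P \<eta> T then K3 * exp (- K4 * real n * (gp P \<eta> \<delta> (omega P \<eta> \<delta> \<epsilon> r))\<^sup>2) else 0))"
proof -
  interpret PS: prob_space P by (rule ps)
  define M where "M = PiM {..<n} (\<lambda>_. P)"
  interpret PM: prob_space M unfolding M_def by (intro prob_space_PiM) (use ps in auto)
  define m where "m = max (\<phi> n True) (\<phi> n False)"
  define e where "e = pmin * \<epsilon> / 32"
  define \<omega> where "\<omega> = omega P \<eta> \<delta> \<epsilon> r"
  define G where "G = min (if \<delta> = Dm P \<eta> T then gm P \<eta> \<delta> \<omega> else 1) (if \<delta> = Dp P \<eta> T then gp P \<eta> \<delta> \<omega> else 1)"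
  define \<tau> where "\<tau> = cc * min \<epsilon> G"
  define \<kappa> where "\<kappa> = 2*e + 2*(T+2)*\<tau>/pmin"
  define PT where "PT = [T - pmin*\<epsilon>/2, T + pmin*\<epsilon>/2, T - 2*r, T + 2*r, T - r/2, T + r/2, T + 2]"
  define fL where "fL t = [(True, {x. \<eta> True x > lev P True (t - \<kappa>)}),
      (False, {x. \<eta> False x > lev P False (t - \<kappa>)}), (True, {x. \<eta> True x > lev P True (t + \<kappa>)}),
      (False, {x. \<eta> False x > lev P False (t + \<kappa>)})]" for t
  define Ls where "Ls = [(True, UNIV), (False, UNIV)] @ concat (map fL PT)"
  define W where "W p = {w \<in> space P. fst w \<in> snd p \<and> fst (snd w) = fst p}" for p :: "bool \<times> 'x set"
  define HB where "HB p = {s \<in> space M. \<tau> \<le> \<bar>real (card {i. i < n \<and> s i \<in> W p}) / real n - measure P (W p)\<bar>}" for p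
  have mpos: "m > 0" using phipos[OF n, of True] by (simp add: m_def)
  have phim: "\<phi> n a' \<le> m" for a' by (cases a') (auto simp: m_def)
  have \<epsilon>0: "\<epsilon> > 0"
  proof -
    have "LTc * m > 0" using LTpos mpos by simp
    thus ?thesis using e1 by (simp add: m_def)
  qed
  have r0: "r > 0" using \<epsilon>0 e2 by simp
  have uf: "r < 1/8" "r < e0/4" "r < U\<eta>" "T > 0 \<longrightarrow> r < T/4" using UT_facts[OF r2] by auto
  have pm: "0 < pmin" "pmin \<le> 1" using pmin_pos pm1 by auto
  have epos: "e > 0" using pm \<epsilon>0 by (simp add: e_def)
  have eL: "L\<eta> * \<phi> n a' < e" for a'
  proof -
    have "L\<eta> * \<phi> n a' \<le> L\<eta> * m" using phim[of a'] cpos by (intro mult_left_mono) auto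
    also have "L\<eta> * m = pmin * (LTc * m) / 32"
    proof -
      have gen: "\<And>x y::real. x > 0 \<Longrightarrow> x * (y/x) = y" by simp
      have "pmin * LTc = 32 * L\<eta>" unfolding LTc_def by (rule gen[OF pmin_pos])
      note h = this
      have "pmin * (LTc * m) / 32 = (pmin * LTc) * m / 32" by (simp only: mult.assoc)
      also have "\<dots> = (32 * L\<eta>) * m / 32" by (simp only: h)
      also have "\<dots> = L\<eta> * m" by simp
      finally show ?thesis by (rule sym)
    qed
    also have "pmin * (LTc * m) / 32 < pmin * \<epsilon> / 32" using e1 pm by (simp add: m_def)
    finally show ?thesis by (simp add: e_def)
  qed
  have eU: "e < U\<eta>"
  proof -
    have "pmin * \<epsilon> \<le> 1 * \<epsilon>" using pm \<epsilon>0 by (intro mult_right_mono) auto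
    hence "e \<le> \<epsilon>/32" by (simp add: e_def)
    thus ?thesis using e2 uf \<epsilon>0 by simp
  qed
  have om0: "\<omega> \<ge> 0" using \<epsilon>0 r0 by (simp add: \<omega>_def omega_def)
  have G0: "G \<ge> 0" using gm_nonneg[OF om0] gp_nonneg[OF om0] by (simp add: G_def)
  have tau0: "\<tau> \<ge> 0" using cc_pos G0 \<epsilon>0 by (simp add: \<tau>_def)
  have tauE: "\<tau> \<le> cc * \<epsilon>" using cc_pos by (simp add: \<tau>_def mult_left_mono)
  have tauG: "\<tau> \<le> cc * G" using cc_pos by (simp add: \<tau>_def mult_left_mono)
  have Lsb: "snd p \<in> sets borel" if "p \<in> set Ls" for p
    using that by (auto simp: Ls_def fL_def intro: sets_gt)
  have Wsets: "W p \<in> sets P" if "p \<in> set Ls" for p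
    unfolding W_def by (rule Wset[OF Lsb[OF that]])
  have HBs: "HB p \<in> sets M" if "p \<in> set Ls" for p
    unfolding HB_def M_def by (rule HB_sets[OF Wsets[OF that]])
  have HBm: "measure M (HB p) \<le> 2 * exp (-2 * real n * \<tau>\<^sup>2)" if "p \<in> set Ls" for p
    unfolding HB_def M_def by (rule hoeff_set[OF ps Wsets[OF that] n tau0])
  have "\<forall>a'. \<exists>F. F \<in> sets M \<and> {s. \<exists>x\<in>\<Omega>. \<bar>eh n a' s x - \<eta> a' x\<bar> > e} \<inter> space M \<subseteq> F
      \<and> measure M F \<le> c1\<eta> * exp (- c2\<eta> * (e / \<phi> n a')\<^sup>2)"
  proof
    fix a'
    show "\<exists>F. F \<in> sets M \<and> {s. \<exists>x\<in>\<Omega>. \<bar>eh n a' s x - \<eta> a' x\<bar> > e} \<inter> space M \<subseteq> F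
      \<and> measure M F \<le> c1\<eta> * exp (- c2\<eta> * (e / \<phi> n a')\<^sup>2)"
      using ehb[OF n eL eU, of a'] unfolding outer_prob_le_def M_def by blast
  qed
  then obtain Fa where Fa0: "\<forall>a'. Fa a' \<in> sets M \<and> {s. \<exists>x\<in>\<Omega>. \<bar>eh n a' s x - \<eta> a' x\<bar> > e} \<inter> space M \<subseteq> Fa a'
      \<and> measure M (Fa a') \<le> c1\<eta> * exp (- c2\<eta> * (e / \<phi> n a')\<^sup>2)"
    by (rule choice[THEN exE])
  have Fa: "\<And>a'. Fa a' \<in> sets M" "\<And>a'. {s. \<exists>x\<in>\<Omega>. \<bar>eh n a' s x - \<eta> a' x\<bar> > e} \<inter> space M \<subseteq> Fa a'"
      "\<And>a'. measure M (Fa a') \<le> c1\<eta> * exp (- c2\<eta> * (e / \<phi> n a')\<^sup>2)"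
    using Fa0 by auto
  have AP: "AE w in P. fst w \<in> \<Omega>"
  proof -
    have Aset: "{w\<in>space P. fst w \<in> \<Omega>} \<in> sets P"
    proof -
      have "fst -` \<Omega> \<inter> space P \<in> sets P" using mfst Om(1) by (rule measurable_sets)
      moreover have "fst -` \<Omega> \<inter> space P = {w\<in>space P. fst w \<in> \<Omega>}" by auto
      ultimately show ?thesis by simp
    qed
    have "AE w in P. w \<in> {w\<in>space P. fst w \<in> \<Omega>}" using PS.AE_in_set_eq_1[OF Aset] Om(2) by simp
    thus ?thesis by (rule eventually_mono) auto
  qed
  have AM: "AE s in M. \<forall>i\<in>{..<n}. fst (s i) \<in> \<Omega>"
  proof (rule eventually_ball_finite)
    show "finite {..<n}" by simp
    show "\<forall>i\<in>{..<n}. AE s in M. fst (s i) \<in> \<Omega>"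
      unfolding M_def by (intro ballI AE_PiM_component[where P="\<lambda>w. fst w \<in> \<Omega>"] AP) (use ps in auto)
  qed
  obtain N where N: "{s\<in>space M. \<not> (\<forall>i\<in>{..<n}. fst (s i) \<in> \<Omega>)} \<subseteq> N" "emeasure M N = 0" "N \<in> sets M"
    using AE_E[OF AM] by blast
  define F where "F = (\<Union>p\<in>set Ls. HB p) \<union> Fa True \<union> Fa False \<union> N"
  have s1: "(\<Union>p\<in>set Ls. HB p) \<in> sets M" by (rule sets.finite_UN) (auto intro: HBs)
  have Fs: "F \<in> sets M" unfolding F_def using s1 Fa(1) N(3) by auto
  have good: "\<bar>That eh n s \<delta> \<Delta> r a - Tstar P \<eta> \<delta> a\<bar> \<le> \<epsilon>" if sM: "s \<in> space M" and ns: "s \<notin> F" for s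
  proof -
    have sP: "\<And>i. i < n \<Longrightarrow> s i \<in> space P" using sM by (auto simp: M_def space_PiM)
    have cardeq: "card {i. i < n \<and> s i \<in> W p} = cnt n s (fst p) (snd p)" for p
      unfolding cnt_def W_def using sP by (intro arg_cong[where f=card]) auto
    have measeq: "measure P (W p) = mu P (fst p) (snd p)" for p by (simp add: W_def mu_def)
    have g1: "\<bar>real (cnt n s (fst p) (snd p)) / n - mu P (fst p) (snd p)\<bar> \<le> \<tau>" if "p \<in> set Ls" for p
    proof -
      have "s \<notin> HB p" using ns that unfolding F_def by auto
      hence "\<not> \<tau> \<le> \<bar>real (card {i. i < n \<and> s i \<in> W p}) / real n - measure P (W p)\<bar>" using sM by (simp add: HB_def)
      thus ?thesis using cardeq[of p] measeq[of p] by simp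
    qed
    have q: "\<bar>real (ncount n s a') / n - pA P a'\<bar> \<le> \<tau>" for a'
    proof -
      have "(a', UNIV) \<in> set Ls" by (cases a') (auto simp: Ls_def)
      from g1[OF this] show ?thesis by (simp add: cnt_def ncount_def pA_mu)
    qed
    have g2: "\<bar>eh n a' s x - \<eta> a' x\<bar> \<le> e" if "x \<in> \<Omega>" for a' x
    proof (rule ccontr)
      assume "\<not> ?thesis"
      hence "e < \<bar>eh n a' s x - \<eta> a' x\<bar>" by simp
      hence "s \<in> {s. \<exists>x\<in>\<Omega>. \<bar>eh n a' s x - \<eta> a' x\<bar> > e} \<inter> space M" using sM that by blast
      hence "s \<in> Fa a'" using Fa(2)[of a'] by blast
      thus False using ns unfolding F_def by (cases a') auto
    qed
    have g3: "fst (s i) \<in> \<Omega>" if "i < n" for i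
    proof (rule ccontr)
      assume "\<not> ?thesis"
      hence "s \<in> N" using N(1) sM that by auto
      thus False using ns unfolding F_def by auto
    qed
    have close: "\<bar>eh n a' s (fst (s i)) - \<eta> a' (fst (s i))\<bar> \<le> e" if "i < n" for a' i
      using g2[OF g3[OF that]] by simp
    have emp: "\<bar>real (cnt n s a' {x. \<eta> a' x > lev P a' (t - \<kappa>)}) / n - mu P a' {x. \<eta> a' x > lev P a' (t - \<kappa>)}\<bar> \<le> \<tau>
      \<and> \<bar>real (cnt n s a' {x. \<eta> a' x > lev P a' (t + \<kappa>)}) / n - mu P a' {x. \<eta> a' x > lev P a' (t + \<kappa>)}\<bar> \<le> \<tau>"
      if t: "t \<in> {T - pmin*\<epsilon>/2, T + pmin*\<epsilon>/2, T - 2*r, T + 2*r, T - r/2, T + r/2, T + 2}" for t a'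
    proof -
      have tP: "t \<in> set PT" using t by (simp add: PT_def)
      have "(a', {x. \<eta> a' x > lev P a' (t - \<kappa>)}) \<in> set Ls" "(a', {x. \<eta> a' x > lev P a' (t + \<kappa>)}) \<in> set Ls"
      proof -
        have "(a', {x. \<eta> a' x > lev P a' (t - \<kappa>)}) \<in> set (fL t)" "(a', {x. \<eta> a' x > lev P a' (t + \<kappa>)}) \<in> set (fL t)"
          by (cases a'; simp add: fL_def)+
        thus "(a', {x. \<eta> a' x > lev P a' (t - \<kappa>)}) \<in> set Ls" "(a', {x. \<eta> a' x > lev P a' (t + \<kappa>)}) \<in> set Ls"
          using tP unfolding Ls_def by auto
      qed
      from g1[OF this(1)] g1[OF this(2)] show ?thesis by simp
    qed
    have tauG': "\<tau> \<le> cc * min (if \<delta> = Dm P \<eta> T then gm P \<eta> \<delta> (omega P \<eta> \<delta> \<epsilon> r) else 1)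
                            (if \<delta> = Dp P \<eta> T then gp P \<eta> \<delta> (omega P \<eta> \<delta> \<epsilon> r) else 1)"
      using tauG unfolding G_def \<omega>_def .
    show ?thesis
      by (rule main_det[OF n r2 D1 D2 \<epsilon>0 e2 e_def tau0 tauE tauG' \<kappa>_def q close emp])
  qed
  have incl: "{s. \<bar>That eh n s \<delta> \<Delta> r a - Tstar P \<eta> \<delta> a\<bar> > \<epsilon>} \<inter> space M \<subseteq> F"
  proof
    fix s assume s: "s \<in> {s. \<bar>That eh n s \<delta> \<Delta> r a - Tstar P \<eta> \<delta> a\<bar> > \<epsilon>} \<inter> space M"
    show "s \<in> F"
    proof (rule ccontr)
      assume "s \<notin> F"
      hence "\<bar>That eh n s \<delta> \<Delta> r a - Tstar P \<eta> \<delta> a\<bar> \<le> \<epsilon>" using good s by blast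
      thus False using s by simp
    qed
  qed
  have mU: "measure M (\<Union>p\<in>set Ls. HB p) \<le> 60 * exp (-2 * real n * \<tau>\<^sup>2)"
  proof -
    have "measure M (\<Union>p\<in>set Ls. HB p) \<le> (\<Sum>p\<in>set Ls. measure M (HB p))"
      by (rule PM.finite_measure_subadditive_finite) (use HBs in auto)
    also have "\<dots> \<le> (\<Sum>p\<in>set Ls. 2 * exp (-2 * real n * \<tau>\<^sup>2))" by (rule sum_mono) (rule HBm)
    also have "\<dots> = real (card (set Ls)) * (2 * exp (-2 * real n * \<tau>\<^sup>2))" by simp
    also have "\<dots> \<le> real (length Ls) * (2 * exp (-2 * real n * \<tau>\<^sup>2))"
      by (intro mult_right_mono) (auto simp: card_length)
    also have "length Ls = 30"
    proof -
      have "length (fL t) = 4" for t by (simp add: fL_def)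
      thus ?thesis by (simp add: Ls_def PT_def)
    qed
    finally show ?thesis by simp
  qed
  have mN: "measure M N = 0" using N(2) by (simp add: measure_def)
  have mF: "measure M F \<le> 60 * exp (-2 * real n * \<tau>\<^sup>2) + c1\<eta> * exp (- c2\<eta> * (e / \<phi> n True)\<^sup>2) + c1\<eta> * exp (- c2\<eta> * (e / \<phi> n False)\<^sup>2)"
  proof -
    have "measure M F \<le> measure M ((\<Union>p\<in>set Ls. HB p) \<union> Fa True \<union> Fa False) + measure M N"
      unfolding F_def by (rule measure_Un_le) (use s1 Fa(1) N(3) in auto)
    also have "measure M ((\<Union>p\<in>set Ls. HB p) \<union> Fa True \<union> Fa False) \<le> measure M ((\<Union>p\<in>set Ls. HB p) \<union> Fa True) + measure M (Fa False)"
      by (rule measure_Un_le) (use s1 Fa(1) in auto)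
    also have "measure M ((\<Union>p\<in>set Ls. HB p) \<union> Fa True) \<le> measure M (\<Union>p\<in>set Ls. HB p) + measure M (Fa True)"
      by (rule measure_Un_le) (use s1 Fa(1) in auto)
    finally show ?thesis using mU Fa(3)[of True] Fa(3)[of False] mN by simp
  qed
  define X where "X = (\<epsilon> / m)\<^sup>2"
  have X0: "X \<ge> 0" by (simp add: X_def)
  have fb: "exp (- c2\<eta> * (e / \<phi> n a')\<^sup>2) \<le> exp (- K2 * X)" for a'
  proof -
    have ph: "\<phi> n a' > 0" using phipos[OF n] by simp
    have "e / m \<le> e / \<phi> n a'" using phim[of a'] ph epos by (intro divide_left_mono) auto
    moreover have "0 \<le> e / m" using epos mpos by simp
    ultimately have sq: "(e / m)\<^sup>2 \<le> (e / \<phi> n a')\<^sup>2" by (intro power_mono) auto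
    have em: "(e / m)\<^sup>2 = (pmin/32)\<^sup>2 * X" by (simp add: X_def e_def power_divide power_mult_distrib)
    have "K2 * X \<le> c2\<eta> * (pmin/32)\<^sup>2 * X" unfolding K2_def using X0 by (intro mult_right_mono) auto
    also have "\<dots> = c2\<eta> * (e / m)\<^sup>2" using em by simp
    also have "\<dots> \<le> c2\<eta> * (e / \<phi> n a')\<^sup>2" using sq cpos by (intro mult_left_mono) auto
    finally show ?thesis by simp
  qed
  have nm: "c\<mu>^2 \<le> real n * m^2"
  proof (rule nm_gen[OF n])
    show "0 \<le> c\<mu>" using cmu by simp
    show "c\<mu> * real n powr (-1/2) \<le> m" using philow[OF n, of True] phim[of True] by simp
  qed
  have Eb: "60 * exp (-2 * real n * \<tau>\<^sup>2) \<le> 60 * exp (- K2 * X)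
      + (if \<delta> = Dm P \<eta> T then K3 * exp (- K4 * real n * (gm P \<eta> \<delta> (omega P \<eta> \<delta> \<epsilon> r))\<^sup>2) else 0)
      + (if \<delta> = Dp P \<eta> T then K3 * exp (- K4 * real n * (gp P \<eta> \<delta> (omega P \<eta> \<delta> \<epsilon> r))\<^sup>2) else 0)"
    (is "_ \<le> _ + ?I1 + ?I2")
  proof -
    have I0: "?I1 \<ge> 0" "?I2 \<ge> 0" by (auto simp: K3_def)
    show ?thesis
    proof (cases "\<epsilon> \<le> G")
      case True
      hence tv: "\<tau> = cc * \<epsilon>" by (simp add: \<tau>_def)
      have "K2 * X \<le> (2*cc^2*c\<mu>^2) * X" unfolding K2_def using X0 by (intro mult_right_mono) auto
      also have "\<dots> = 2*cc^2*\<epsilon>^2 * (c\<mu>^2 / m^2)" by (simp add: X_def power_divide)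
      also have "\<dots> \<le> 2*cc^2*\<epsilon>^2 * real n"
      proof -
        have "c\<mu>^2 / m^2 \<le> real n" using nm mpos by (simp add: field_simps)
        thus ?thesis by (intro mult_left_mono) auto
      qed
      also have "\<dots> = 2 * real n * \<tau>\<^sup>2" by (simp add: tv power_mult_distrib)
      finally have kx: "K2 * X \<le> 2 * real n * \<tau>\<^sup>2" .
      have "exp (-2 * real n * \<tau>\<^sup>2) \<le> exp (- K2 * X)" using kx by simp
      hence "60 * exp (-2 * real n * \<tau>\<^sup>2) \<le> 60 * exp (- K2 * X)" by simp
      thus ?thesis using I0 by linarith
    next
      case False
      hence tv: "\<tau> = cc * G" and G1: "G < 1" using e2 uf by (auto simp: \<tau>_def)
      have ex: "2 * real n * \<tau>\<^sup>2 = K4 * real n * G\<^sup>2" by (simp add: tv K4_def power_mult_distrib)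
      have "(\<delta> = Dm P \<eta> T \<and> G = gm P \<eta> \<delta> \<omega>) \<or> (\<delta> = Dp P \<eta> T \<and> G = gp P \<eta> \<delta> \<omega>)"
      proof -
        have "G = (if \<delta> = Dm P \<eta> T then gm P \<eta> \<delta> \<omega> else 1) \<or> G = (if \<delta> = Dp P \<eta> T then gp P \<eta> \<delta> \<omega> else 1)"
          unfolding G_def by (rule min_def_disj)
        thus ?thesis using G1 by (cases "\<delta> = Dm P \<eta> T"; cases "\<delta> = Dp P \<eta> T") auto
      qed
      thus ?thesis
      proof
        assume h: "\<delta> = Dm P \<eta> T \<and> G = gm P \<eta> \<delta> \<omega>"
        have "60 * exp (-2 * real n * \<tau>\<^sup>2) = ?I1" using h ex by (simp add: K3_def \<omega>_def)
        moreover have "exp (- K2 * X) \<ge> 0" by simp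
        ultimately show ?thesis using I0 by linarith
      next
        assume h: "\<delta> = Dp P \<eta> T \<and> G = gp P \<eta> \<delta> \<omega>"
        have "60 * exp (-2 * real n * \<tau>\<^sup>2) = ?I2" using h ex by (simp add: K3_def \<omega>_def)
        moreover have "exp (- K2 * X) \<ge> 0" by simp
        ultimately show ?thesis using I0 by linarith
      qed
    qed
  qed
  have final: "measure M F \<le> K1 * exp (- K2 * (\<epsilon> / max (\<phi> n True) (\<phi> n False))\<^sup>2)
      + (if \<delta> = Dm P \<eta> T then K3 * exp (- K4 * real n * (gm P \<eta> \<delta> (omega P \<eta> \<delta> \<epsilon> r))\<^sup>2) else 0)
      + (if \<delta> = Dp P \<eta> T then K3 * exp (- K4 * real n * (gp P \<eta> \<delta> (omega P \<eta> \<delta> \<epsilon> r))\<^sup>2) else 0)"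
  proof -
    have "c1\<eta> * exp (- c2\<eta> * (e / \<phi> n True)\<^sup>2) \<le> c1\<eta> * exp (- K2 * X)" using fb cpos by (intro mult_left_mono) auto
    moreover have "c1\<eta> * exp (- c2\<eta> * (e / \<phi> n False)\<^sup>2) \<le> c1\<eta> * exp (- K2 * X)" using fb cpos by (intro mult_left_mono) auto
    moreover have "K1 * exp (- K2 * X) = 60 * exp (- K2 * X) + 2 * (c1\<eta> * exp (- K2 * X))" by (simp add: K1_def algebra_simps)
    ultimately show ?thesis using mF Eb by (simp add: X_def m_def)
  qed
  show ?thesis unfolding outer_prob_le_def M_def[symmetric]
    using Fs incl final by blast
qed

end

theorem corollary6p1:
  fixes P :: "('x::euclidean_space \<times> bool \<times> bool) measure"
    and \<eta> :: "bool \<Rightarrow> 'x \<Rightarrow> real"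
    and eh :: "nat \<Rightarrow> bool \<Rightarrow> (nat \<Rightarrow> 'x \<times> bool \<times> bool) \<Rightarrow> 'x \<Rightarrow> real"
    and \<phi> :: "nat \<Rightarrow> bool \<Rightarrow> real"
    and \<delta> \<gamma> c\<mu> :: real
  assumes "prob_space P"
    and "sets P = sets (borel \<Otimes>\<^sub>M count_space UNIV \<Otimes>\<^sub>M count_space UNIV)"
    and "\<forall>a. pA P a > 0"
    and "is_regression P \<eta>"
    and "0 \<le> \<delta>"
    and "0 < \<gamma>"
    and "Dp P \<eta> 0 \<ge> - Dm P \<eta> 0"
    and "margin_condition P \<eta> \<delta> \<gamma>"
    and "c\<mu> > 0"
    and "\<forall>n a. 1 \<le> n \<longrightarrow> \<phi> n a > 0"
    and "\<forall>n m a. 1 \<le> n \<longrightarrow> n \<le> m \<longrightarrow> \<phi> m a \<le> \<phi> n a"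
    and "\<forall>n a. 1 \<le> n \<longrightarrow> \<phi> n a \<ge> c\<mu> * real n powr (-1/2)"
    and "\<forall>n a x. (\<lambda>s. eh n a s x) \<in> borel_measurable (\<Pi>\<^sub>M i\<in>{..<n}. P)"
    and "\<exists>c1\<eta> c2\<eta> L\<eta> U\<eta> \<Omega>. c1\<eta> > 0 \<and> c2\<eta> > 0 \<and> L\<eta> > 0 \<and> U\<eta> > 0 \<and>
           \<Omega> \<in> sets borel \<and> measure P {w \<in> space P. fst w \<in> \<Omega>} = 1 \<and>
           (\<forall>n a \<epsilon>. 1 \<le> n \<and> L\<eta> * \<phi> n a < \<epsilon> \<and> \<epsilon> < U\<eta> \<longrightarrow>
              outer_prob_le (\<Pi>\<^sub>M i\<in>{..<n}. P)
                {s. \<exists>x\<in>\<Omega>. \<bar>eh n a s x - \<eta> a x\<bar> > \<epsilon>}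
                (c1\<eta> * exp (- c2\<eta> * (\<epsilon> / \<phi> n a)\<^sup>2)))"
  shows "\<exists>c1 c2 c3 c4 LT UT U\<Delta>. c1 > 0 \<and> c2 > 0 \<and> c3 > 0 \<and> c4 > 0 \<and> LT > 0 \<and> UT > 0 \<and> U\<Delta> > 0 \<and>
    (\<forall>a n r \<Delta> \<epsilon>. 1 \<le> n
        \<and> LT * max (\<phi> n True) (\<phi> n False) < r \<and> r < UT
        \<and> 2 * max (gm P \<eta> \<delta> (4 * r)) (gp P \<eta> \<delta> (4 * r)) < \<Delta> \<and> \<Delta> < U\<Delta>
        \<and> LT * max (\<phi> n True) (\<phi> n False) < \<epsilon> \<and> \<epsilon> < r \<longrightarrow>
      outer_prob_le (\<Pi>\<^sub>M i\<in>{..<n}. P)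
        {s. \<bar>That eh n s \<delta> \<Delta> r a - Tstar P \<eta> \<delta> a\<bar> > \<epsilon>}
        (c1 * exp (- c2 * (\<epsilon> / max (\<phi> n True) (\<phi> n False))\<^sup>2)
         + (if \<delta> = Dm P \<eta> (tstar P \<eta> \<delta>)
            then c3 * exp (- c4 * real n * (gm P \<eta> \<delta> (omega P \<eta> \<delta> \<epsilon> r))\<^sup>2) else 0)
         + (if \<delta> = Dp P \<eta> (tstar P \<eta> \<delta>)
            then c3 * exp (- c4 * real n * (gp P \<eta> \<delta> (omega P \<eta> \<delta> \<epsilon> r))\<^sup>2) else 0)))"
  proof -
  obtain c1\<eta> c2\<eta> L\<eta> U\<eta> \<Omega> where H: "c1\<eta> > 0" "c2\<eta> > 0" "L\<eta> > 0" "U\<eta> > 0"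
       "\<Omega> \<in> sets borel" "measure P {w \<in> space P. fst w \<in> \<Omega>} = 1"
       "\<forall>n a \<epsilon>. 1 \<le> n \<and> L\<eta> * \<phi> n a < \<epsilon> \<and> \<epsilon> < U\<eta> \<longrightarrow>
              outer_prob_le (\<Pi>\<^sub>M i\<in>{..<n}. P)
                {s. \<exists>x\<in>\<Omega>. \<bar>eh n a s x - \<eta> a x\<bar> > \<epsilon>}
                (c1\<eta> * exp (- c2\<eta> * (\<epsilon> / \<phi> n a)\<^sup>2))"
    using assms(14) by blast
  obtain e0 U where MC: "e0 > 0" "U > 0" "\<forall>\<epsilon>. 0 < \<epsilon> \<and> \<epsilon> < e0 \<longrightarrow>
        max (gm P \<eta> \<delta> \<epsilon>) (gp P \<eta> \<delta> \<epsilon>) \<le> U * \<epsilon> powr \<gamma>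
      \<and> (Dm P \<eta> (tstar P \<eta> \<delta>) = \<delta> \<longrightarrow> gm P \<eta> \<delta> \<epsilon> \<ge> \<epsilon> powr \<gamma> / U)
      \<and> (Dp P \<eta> (tstar P \<eta> \<delta>) = \<delta> \<longrightarrow> gp P \<eta> \<delta> \<epsilon> \<ge> \<epsilon> powr \<gamma> / U)"
    using assms(8) unfolding margin_condition_def by blast
  have popI: "pop P \<eta>"
    by (rule pop.intro) (use assms(1-4) in auto)
  have pmI: "pop_margin P \<eta> \<delta> \<gamma> e0 U"
    by (intro pop_margin.intro popI pop_margin_axioms.intro) (use assms(5,6) MC in auto)
  have mcI: "mainctx P \<eta> \<delta> \<gamma> e0 U eh \<phi> c\<mu> c1\<eta> c2\<eta> L\<eta> U\<eta> \<Omega>"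
    by (intro mainctx.intro pmI mainctx_axioms.intro) (use assms(9,10,12) H in auto)
  interpret MC: mainctx P \<eta> \<delta> \<gamma> e0 U eh \<phi> c\<mu> c1\<eta> c2\<eta> L\<eta> U\<eta> \<Omega> by (rule mcI)
  show ?thesis
  proof (intro exI conjI)
    show "MC.K1 > 0" "MC.K2 > 0" "MC.K3 > 0" "MC.K4 > 0" "MC.LTc > 0" "MC.UTc > 0" "MC.UDc > 0"
      by (rule MC.consts_pos)+
    show "\<forall>a n r \<Delta> \<epsilon>. 1 \<le> n
        \<and> MC.LTc * max (\<phi> n True) (\<phi> n False) < r \<and> r < MC.UTc
        \<and> 2 * max (gm P \<eta> \<delta> (4 * r)) (gp P \<eta> \<delta> (4 * r)) < \<Delta> \<and> \<Delta> < MC.UDc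
        \<and> MC.LTc * max (\<phi> n True) (\<phi> n False) < \<epsilon> \<and> \<epsilon> < r \<longrightarrow>
      outer_prob_le (\<Pi>\<^sub>M i\<in>{..<n}. P)
        {s. \<bar>That eh n s \<delta> \<Delta> r a - Tstar P \<eta> \<delta> a\<bar> > \<epsilon>}
        (MC.K1 * exp (- MC.K2 * (\<epsilon> / max (\<phi> n True) (\<phi> n False))\<^sup>2)
         + (if \<delta> = Dm P \<eta> (tstar P \<eta> \<delta>)
            then MC.K3 * exp (- MC.K4 * real n * (gm P \<eta> \<delta> (omega P \<eta> \<delta> \<epsilon> r))\<^sup>2) else 0)
         + (if \<delta> = Dp P \<eta> (tstar P \<eta> \<delta>)
            then MC.K3 * exp (- MC.K4 * real n * (gp P \<eta> \<delta> (omega P \<eta> \<delta> \<epsilon> r))\<^sup>2) else 0))"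
      using MC.main_bound by blast
  qed
qed

end
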